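(* Let $L\subseteq \mathbb{K}^{2n}\oplus\mathbb{K}^{2m}$ be a nonempty affine Lagrangian relation $L:n\to m$. Then there exist $k\in\mathbb{N}$ with $k\le \min(n,m)$, an affine symplectomorphism $S$ of $(\mathbb{K}^{2n},\omega_n)$ and an affine symplectomorphism $T$ of $(\mathbb{K}^{2m},\omega_m)$ such that \[ L=\Gamma_T\circ\big(\mathrm{id}_{k}\oplus P_{m-k}\big)\circ\big(\mathrm{id}_{k}\oplus P_{n-k}^{\dagger}\big)\circ\Gamma_S, \] i.e. \[ L=\Big\{\big(v,\;T(u\oplus p)\big)\;\Big|\; v\in\mathbb{K}^{2n},\ u\in\mathbb{K}^{2k},\ p\in P_{m-k},\ \exists q\in P_{n-k}:\ S v=u\oplus q\Big\}. \] Moreover, if $L$ is a (nonempty) linear Lagrangian relation, $S$ and $T$ can be chosen to be linear symplectomorphisms.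
   Context: $\mathbb{K}$ is an arbitrary field. For $n\in\mathbb{N}$, $\mathbb{K}^{2n}=\bigoplus_{j=0}^{n-1}\mathbb{K}^2$ with coordinates $(z_j,x_j)$ carries the symplectic form $\omega_n\big(\bigoplus_j (z_j,x_j),\bigoplus_j(z'_j,x'_j)\big)=\sum_j (z_jx'_j-x_jz'_j)$. A relation $n\to m$ is a subset of $\mathbb{K}^{2n}\oplus\mathbb{K}^{2m}$, which is given the symplectic form $((v,w),(v',w'))\mapsto \omega_n(v,v')-\omega_m(w,w')$. For a linear subspace $S$ of a symplectic space $(V,\omega)$, $S^\omega=\{v: \omega(v,s)=0\ \forall s\in S\}$; $S$ is Lagrangian if $S=S^\omega$. An affine subspace (possibly empty) is Lagrangian if it is empty or its underlying linear subspace (direction) is Lagrangian; an affine (resp. linear) Lagrangian relation $n\to m$ is an affine (resp. linear) Lagrangian subspace of $\mathbb{K}^{2n}\oplus\mathbb{K}^{2m}$. Relations compose by relational composition $S\circ R=\{(a,c):\exists b,\ (a,b)\in R,(b,c)\in S\}$; $\oplus$ of relations is the direct sum (cartesian product, with coordinates concatenated), and $\mathrm{id}_k$ is the diagonal of $\mathbb{K}^{2k}$. An affine symplectomorphism is an affine bijection whose linear part preserves the symplectic form; $\Gamma_S=\{(v,Sv)\}$ denotes its graph. $P_r=\{\bigoplus_{j=0}^{r-1}(0,x_j): x_j\in\mathbb{K}\}\subseteq\mathbb{K}^{2r}$, viewed as a relation $0\to r$; for a relation $R:n\to m$, its dagger $R^\dagger:m\to n$ is $\{(\bigoplus_j(z_j,-x_j),\bigoplus_k(z'_k,-x'_k))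 : (\bigoplus_k(z'_k,x'_k),\bigoplus_j(z_j,x_j))\in R\}$, so $P_r^\dagger:r\to 0$. *)

theory Defs
  imports Main
begin

text \<open>A vector of K^{2n} = (K^2)^n is represented as a list of n pairs (z_j, x_j).
  Direct sum of vectors is list concatenation.\<close>

type_synonym 'a svec = "('a \<times> 'a) list"

definition vecs :: "nat \<Rightarrow> 'a svec set" where
  "vecs n = {v. length v = n}"

definition vzero :: "nat \<Rightarrow> ('a::zero) svec" where
  "vzero n = replicate n (0, 0)"

definition vadd :: "('a::plus) svec \<Rightarrow> 'a svec \<Rightarrow> 'a svec" where
  "vadd v w = map2 (\<lambda>(z, x) (z', x'). (z + z', x + x')) v w"

definition vscale :: "('a::times) \<Rightarrow> 'a svec \<Rightarrow> 'a svec" where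
  "vscale c v = map (\<lambda>(z, x). (c * z, c * x)) v"

definition omega :: "('a::comm_ring) svec \<Rightarrow> 'a svec \<Rightarrow> 'a" where
  "omega v w = sum_list (map2 (\<lambda>(z, x) (z', x'). z * x' - x * z') v w)"

text \<open>Relations n -> m are subsets of K^{2n} (+) K^{2m}, i.e. sets of pairs of vectors,
  with the symplectic form omega_n(v,v') - omega_m(w,w').\<close>

definition rel_omega :: "('a::comm_ring) svec \<times> 'a svec \<Rightarrow> 'a svec \<times> 'a svec \<Rightarrow> 'a" where
  "rel_omega p q = omega (fst p) (fst q) - omega (snd p) (snd q)"

definition padd :: "('a::plus) svec \<times> 'a svec \<Rightarrow> 'a svec \<times> 'a svec \<Rightarrow> 'a svec \<times> 'a svec" where
  "padd p q = (vadd (fst p) (fst q), vadd (snd p) (snd q))"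

definition pscale :: "('a::times) \<Rightarrow> 'a svec \<times> 'a svec \<Rightarrow> 'a svec \<times> 'a svec" where
  "pscale c p = (vscale c (fst p), vscale c (snd p))"

definition rel_lin_subspace :: "nat \<Rightarrow> nat \<Rightarrow> (('a::field) svec \<times> 'a svec) set \<Rightarrow> bool" where
  "rel_lin_subspace n m D \<longleftrightarrow>
     D \<subseteq> vecs n \<times> vecs m \<and> (vzero n, vzero m) \<in> D \<and>
     (\<forall>p\<in>D. \<forall>q\<in>D. padd p q \<in> D) \<and> (\<forall>c. \<forall>p\<in>D. pscale c p \<in> D)"

definition rel_omega_compl :: "nat \<Rightarrow> nat \<Rightarrow> (('a::field) svec \<times> 'a svec) set \<Rightarrow> ('a svec \<times> 'a svec) set" where
  "rel_omega_compl n m D = {p \<in> vecs n \<times> vecs m. \<forall>s\<in>D. rel_omega p s = 0}"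

definition lin_lagrangian_rel :: "nat \<Rightarrow> nat \<Rightarrow> (('a::field) svec \<times> 'a svec) set \<Rightarrow> bool" where
  "lin_lagrangian_rel n m L \<longleftrightarrow> rel_lin_subspace n m L \<and> L = rel_omega_compl n m L"

definition affine_lagrangian_rel :: "nat \<Rightarrow> nat \<Rightarrow> (('a::field) svec \<times> 'a svec) set \<Rightarrow> bool" where
  "affine_lagrangian_rel n m L \<longleftrightarrow>
     L = {} \<or> (\<exists>a D. a \<in> vecs n \<times> vecs m \<and> lin_lagrangian_rel n m D \<and> L = padd a ` D)"

definition lin_map :: "nat \<Rightarrow> (('a::field) svec \<Rightarrow> 'a svec) \<Rightarrow> bool" where
  "lin_map n A \<longleftrightarrow> (\<forall>v\<in>vecs n. A v \<in> vecs n) \<and>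
     (\<forall>v\<in>vecs n. \<forall>w\<in>vecs n. A (vadd v w) = vadd (A v) (A w)) \<and>
     (\<forall>c. \<forall>v\<in>vecs n. A (vscale c v) = vscale c (A v))"

definition preserves_omega :: "nat \<Rightarrow> (('a::field) svec \<Rightarrow> 'a svec) \<Rightarrow> bool" where
  "preserves_omega n A \<longleftrightarrow> (\<forall>v\<in>vecs n. \<forall>w\<in>vecs n. omega (A v) (A w) = omega v w)"

definition affine_symp :: "nat \<Rightarrow> (('a::field) svec \<Rightarrow> 'a svec) \<Rightarrow> bool" where
  "affine_symp n S \<longleftrightarrow> bij_betw S (vecs n) (vecs n) \<and>
     (\<exists>A b. b \<in> vecs n \<and> lin_map n A \<and> preserves_omega n A \<and>
            (\<forall>v\<in>vecs n. S v = vadd (A v) b))"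

definition lin_symp :: "nat \<Rightarrow> (('a::field) svec \<Rightarrow> 'a svec) \<Rightarrow> bool" where
  "lin_symp n S \<longleftrightarrow> bij_betw S (vecs n) (vecs n) \<and> lin_map n S \<and> preserves_omega n S"

definition graph :: "nat \<Rightarrow> ('a svec \<Rightarrow> 'a svec) \<Rightarrow> ('a svec \<times> 'a svec) set" where
  "graph n S = {(v, S v) | v. v \<in> vecs n}"

definition idrel :: "nat \<Rightarrow> ('a svec \<times> 'a svec) set" where
  "idrel k = {(v, v) | v. v \<in> vecs k}"

definition rsum :: "('a svec \<times> 'a svec) set \<Rightarrow> ('a svec \<times> 'a svec) set \<Rightarrow> ('a svec \<times> 'a svec) set" where
  "rsum R R' = {(a @ a', b @ b') | a b a' b'. (a, b) \<in> R \<and> (a', b') \<in> R'}"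

definition Prel :: "nat \<Rightarrow> (('a::zero) svec \<times> 'a svec) set" where
  "Prel r = {([], map (\<lambda>x. (0, x)) xs) | xs. length xs = r}"

definition negx :: "('a::uminus) svec \<Rightarrow> 'a svec" where
  "negx v = map (\<lambda>(z, x). (z, - x)) v"

definition dagger :: "(('a::uminus) svec \<times> 'a svec) set \<Rightarrow> ('a svec \<times> 'a svec) set" where
  "dagger R = {(negx b, negx a) | a b. (a, b) \<in> R}"

text \<open>Relational composition in diagrammatic order is the library's O:
  R O S = S \<circ> R in the paper's notation.\<close>

end

theory Submission
  imports Defs
begin


lemma len_vadd[simp]: "length (vadd v w) = min (length v) (length w)"
  by (simp add: vadd_def)
lemma len_vscale[simp]: "length (vscale c v) = length v"
  by (simp add: vscale_def)
lemma len_vzero[simp]: "length (vzero n) = n"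
  by (simp add: vzero_def)
lemma vadd_Nil[simp]: "vadd [] w = []" "vadd v [] = []"
  by (auto simp: vadd_def)
lemma vadd_Cons[simp]: "vadd ((a,b)#v) ((c,d)#w) = (a+c,b+d) # vadd v w"
  by (simp add: vadd_def)
lemma vscale_Nil[simp]: "vscale c [] = []" by (simp add: vscale_def)
lemma vscale_Cons[simp]: "vscale c ((a,b)#v) = (c*a,c*b) # vscale c v"
  by (simp add: vscale_def)
lemma vzero_0[simp]: "vzero 0 = []" by (simp add: vzero_def)
lemma vzero_Suc: "vzero (Suc n) = (0,0) # vzero n" by (simp add: vzero_def)
lemma vzero_Suc': "vzero (Suc n) = vzero n @ [(0,0)]" by (simp add: vzero_def replicate_append_same)
lemma omega_Nil[simp]: "omega [] w = 0" "omega v [] = 0"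
  by (auto simp: omega_def)
lemma omega_Cons[simp]: "omega ((a,b)#v) ((c,d)#w) = a*d - b*c + omega v w"
  by (simp add: omega_def)

lemma vecs_iff[simp]: "v \<in> vecs n \<longleftrightarrow> length v = n" by (simp add: vecs_def)

lemma vadd_append: "length a = length c \<Longrightarrow> vadd (a@b) (c@d) = vadd a c @ vadd b d"
  by (simp add: vadd_def)
lemma vscale_append: "vscale c (a@b) = vscale c a @ vscale c b"
  by (simp add: vscale_def)
lemma omega_append: "length a = length c \<Longrightarrow> omega (a@b) (c@d) = omega a c + omega b d"
  by (simp add: omega_def)

lemma nth_vadd: "i < length v \<Longrightarrow> i < length w \<Longrightarrow>
   vadd v w ! i = (fst (v!i) + fst (w!i), snd (v!i) + snd (w!i))"
  by (simp add: vadd_def case_prod_beta)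
lemma nth_vscale: "i < length v \<Longrightarrow> vscale c v ! i = (c * fst (v!i), c * snd (v!i))"
  by (simp add: vscale_def case_prod_beta)
lemma nth_vzero: "i < n \<Longrightarrow> vzero n ! i = (0,0)" by (simp add: vzero_def)

lemma vadd_comm: "vadd v w = vadd (w::('a::ab_semigroup_add) svec) v"
  by (rule nth_equalityI) (auto simp: nth_vadd add.commute)
lemma vadd_assoc: "vadd (vadd u v) w = vadd u (vadd v (w::('a::semigroup_add) svec))"
  by (rule nth_equalityI) (auto simp: nth_vadd add.assoc)
lemma vadd_zero[simp]: "length v = n \<Longrightarrow> vadd v (vzero n) = (v::('a::monoid_add) svec)"
  by (rule nth_equalityI) (auto simp: nth_vadd nth_vzero)
lemma vadd_zero'[simp]: "length v = n \<Longrightarrow> vadd (vzero n) v = (v::('a::monoid_add) svec)"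
  by (rule nth_equalityI) (auto simp: nth_vadd nth_vzero)
lemma vscale_add: "vscale (a+b) v = vadd (vscale a v) (vscale b (v::('a::semiring) svec))"
  by (rule nth_equalityI) (auto simp: nth_vadd nth_vscale distrib_right)
lemma vscale_vadd: "vscale c (vadd v w) = vadd (vscale c v) (vscale c (w::('a::semiring) svec))"
  by (rule nth_equalityI) (auto simp: nth_vadd nth_vscale distrib_left)
lemma vscale_vscale: "vscale a (vscale b v) = vscale (a*b) (v::('a::semigroup_mult) svec)"
  by (rule nth_equalityI) (auto simp: nth_vscale mult.assoc)
lemma vscale_one[simp]: "vscale 1 v = (v::('a::monoid_mult) svec)"
  by (rule nth_equalityI) (auto simp: nth_vscale)
lemma vscale_0[simp]: "vscale 0 v = vzero (length (v::('a::mult_zero) svec))"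
  by (rule nth_equalityI) (auto simp: nth_vscale nth_vzero)
lemma vscale_vzero[simp]: "vscale c (vzero n) = (vzero n::('a::mult_zero) svec)"
  by (rule nth_equalityI) (auto simp: nth_vscale nth_vzero)
lemma vadd_neg: "vadd v (vscale (-1) v) = vzero (length (v::('a::ring_1) svec))"
  by (rule nth_equalityI) (auto simp: nth_vadd nth_vscale nth_vzero)

lemma omega_vadd_left: "length u = length w \<Longrightarrow> length v = length w \<Longrightarrow>
   omega (vadd u v) w = omega u w + omega v (w::('a::comm_ring) svec)"
proof (induction u arbitrary: v w)
  case Nil then show ?case by simp
next
  case (Cons x u) then show ?case
    by (cases x; cases v; cases w) (auto simp: algebra_simps)
qed
lemma omega_vadd_right: "length u = length w \<Longrightarrow> length v = length w \<Longrightarrow>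
   omega w (vadd u v) = omega w u + omega w (v::('a::comm_ring) svec)"
proof (induction u arbitrary: v w)
  case Nil then show ?case by simp
next
  case (Cons x u) then show ?case
    by (cases x; cases v; cases w) (auto simp: algebra_simps)
qed
lemma omega_vscale_left: "omega (vscale c v) w = c * omega v (w::('a::comm_ring) svec)"
proof (induction v arbitrary: w)
  case Nil then show ?case by simp
next
  case (Cons x u) then show ?case
    by (cases x; cases w) (auto simp: algebra_simps)
qed
lemma omega_vscale_right: "omega w (vscale c v) = c * omega w (v::('a::comm_ring) svec)"
proof (induction v arbitrary: w)
  case Nil then show ?case by simp
next
  case (Cons x u) then show ?case
    by (cases x; cases w) (auto simp: algebra_simps)
qed
lemma omega_antisym: "omega v w = - omega w (v::('a::comm_ring) svec)"
proof (induction v arbitrary: w)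
  case Nil then show ?case by simp
next
  case (Cons x u) then show ?case
    by (cases x; cases w) (auto simp: algebra_simps)
qed
lemma omega_self[simp]: "omega v (v::('a::comm_ring) svec) = 0"
  by (induction v) (auto simp: mult.commute)
lemma omega_vzero1[simp]: "omega (vzero n) (v::('a::comm_ring) svec) = 0"
proof (induction n arbitrary: v)
  case (Suc n) then show ?case by (cases v) (auto simp: vzero_Suc)
qed simp
lemma omega_vzero2[simp]: "omega v (vzero n) = (0::'a::comm_ring)"
  using omega_antisym[of v "vzero n"] by simp



lemma lin_map_zero:
  assumes "lin_map n (A::('a::field) svec \<Rightarrow> 'a svec)" shows "A (vzero n) = vzero n"
proof -
  have "A (vscale 0 (vzero n)) = vscale 0 (A (vzero n))"
    using assms by (simp add: lin_map_def del: vscale_0 vscale_vzero)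
  moreover have "length (A (vzero n)) = n" using assms by (simp add: lin_map_def)
  ultimately show ?thesis by simp
qed

lemma lin_symp_intro:
  assumes "lin_map n S" "preserves_omega n S" "\<forall>v\<in>vecs n. S' v \<in> vecs n"
    "\<forall>v\<in>vecs n. S' (S v) = v" "\<forall>v\<in>vecs n. S (S' v) = v"
  shows "lin_symp n S"
  using assms unfolding lin_symp_def
  by (intro conjI bij_betw_byWitness[where f'=S']) (auto simp: lin_map_def)

lemma lin_symp_inv:
  assumes "lin_symp n (S::('a::field) svec \<Rightarrow> 'a svec)"
  obtains S' where "lin_symp n S'" "\<forall>v\<in>vecs n. S' (S v) = v" "\<forall>v\<in>vecs n. S (S' v) = v"
proof -
  let ?S' = "inv_into (vecs n) S"
  have bij: "bij_betw S (vecs n) (vecs n)" using assms by (simp add: lin_symp_def)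
  have i1: "\<forall>v\<in>vecs n. ?S' (S v) = v" using bij by (simp add: bij_betw_inv_into_left)
  have i2: "\<forall>v\<in>vecs n. S (?S' v) = v" using bij by (simp add: bij_betw_inv_into_right)
  have i3: "\<forall>v\<in>vecs n. ?S' (v::'a svec) \<in> vecs n" using bij unfolding bij_betw_def
    by (metis inv_into_into)
  have lm: "lin_map n S" and po: "preserves_omega n S" using assms by (auto simp: lin_symp_def)
  have "lin_map n ?S'"
    unfolding lin_map_def
  proof (intro conjI ballI allI)
    fix v :: "'a svec" assume "v \<in> vecs n" then show "?S' v \<in> vecs n" using i3 by blast
  next
    fix v w :: "'a svec" assume v: "v \<in> vecs n" and w: "w \<in> vecs n"
    have "vadd v w = S (vadd (?S' v) (?S' w))"
      using lm i2 i3 v w by (simp add: lin_map_def)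
    moreover have "vadd (?S' v) (?S' w) \<in> vecs n" using i3 v w by simp
    ultimately show "?S' (vadd v w) = vadd (?S' v) (?S' w)" using i1 by simp
  next
    fix c and v :: "'a svec" assume v: "v \<in> vecs n"
    have "vscale c v = S (vscale c (?S' v))"
      using lm i2 i3 v by (simp add: lin_map_def)
    moreover have "vscale c (?S' v) \<in> vecs n" using i3 v by simp
    ultimately show "?S' (vscale c v) = vscale c (?S' v)" using i1 by simp
  qed
  moreover have "preserves_omega n ?S'"
    unfolding preserves_omega_def
  proof (intro ballI)
    fix v w :: "'a svec" assume v: "v \<in> vecs n" and w: "w \<in> vecs n"
    have "omega (?S' v) (?S' w) = omega (S (?S' v)) (S (?S' w))"
      using po i3 v w by (simp add: preserves_omega_def)
    then show "omega (?S' v) (?S' w) = omega v w" using i2 v w by simp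
  qed
  moreover have Sv: "\<forall>v\<in>vecs n. S (v::'a svec) \<in> vecs n" using lm by (simp add: lin_map_def)
  ultimately have "lin_symp n ?S'"
    using i1 i2 by (intro lin_symp_intro[where S'=S]) blast+
  then show ?thesis using that i1 i2 by blast
qed

lemma lin_symp_vecs: "lin_symp n S \<Longrightarrow> v \<in> vecs n \<Longrightarrow> S v \<in> vecs n"
  by (simp add: lin_symp_def lin_map_def)
lemma lin_symp_omega: "lin_symp n S \<Longrightarrow> v \<in> vecs n \<Longrightarrow> w \<in> vecs n \<Longrightarrow> omega (S v) (S w) = omega v w"
  by (simp add: lin_symp_def preserves_omega_def)
lemma lin_symp_add: "lin_symp n S \<Longrightarrow> v \<in> vecs n \<Longrightarrow> w \<in> vecs n \<Longrightarrow> S (vadd v w) = vadd (S v) (S w)"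
  by (simp add: lin_symp_def lin_map_def)
lemma lin_symp_scale: "lin_symp n S \<Longrightarrow> v \<in> vecs n \<Longrightarrow> S (vscale c v) = vscale c (S v)"
  by (simp add: lin_symp_def lin_map_def)
lemma lin_symp_inj: "lin_symp n S \<Longrightarrow> v \<in> vecs n \<Longrightarrow> w \<in> vecs n \<Longrightarrow> S v = S w \<Longrightarrow> v = w"
  by (auto simp: lin_symp_def bij_betw_def inj_on_def)

lemma lin_symp_id: "lin_symp n id"
  by (rule lin_symp_intro[where S'=id]) (auto simp: lin_map_def preserves_omega_def)

lemma lin_symp_comp:
  assumes "lin_symp n S" "lin_symp n T" shows "lin_symp n (T \<circ> S)"
  using assms unfolding lin_symp_def
  by (auto simp: bij_betw_trans lin_map_def preserves_omega_def)

definition tv :: "('a::field) svec \<Rightarrow> 'a \<Rightarrow> 'a svec \<Rightarrow> 'a svec" where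
  "tv w c v = vadd v (vscale (c * omega w v) w)"

lemma tv_inv: assumes "length w = n" "length v = n" shows "tv w (-c) (tv w c v) = v"
proof -
  have "omega w (tv w c v) = omega w v"
    using assms by (simp add: tv_def omega_vadd_right omega_vscale_right)
  then show ?thesis using assms
    by (simp add: tv_def vadd_assoc vscale_add[symmetric])
qed

lemma tv_lin_symp: fixes w :: "('a::field) svec" assumes "length w = n" shows "lin_symp n (tv w c)"
proof (rule lin_symp_intro[where S'="tv w (-c)"])
  show "lin_map n (tv w c)"
    unfolding lin_map_def
  proof (intro conjI ballI allI)
    fix v :: "'a svec" assume "v \<in> vecs n" then show "tv w c v \<in> vecs n" using assms by (simp add: tv_def)
  next
    fix v u :: "'a svec" assume v: "v \<in> vecs n" and u: "u \<in> vecs n"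
    show "tv w c (vadd v u) = vadd (tv w c v) (tv w c u)"
      using assms v u by (rule_tac nth_equalityI)
        (auto simp: tv_def omega_vadd_right nth_vadd nth_vscale algebra_simps)
  next
    fix a and v :: "'a svec" assume v: "v \<in> vecs n"
    show "tv w c (vscale a v) = vscale a (tv w c v)"
      using assms v by (rule_tac nth_equalityI)
        (auto simp: tv_def omega_vscale_right nth_vadd nth_vscale algebra_simps)
  qed
  show "preserves_omega n (tv w c)"
    unfolding preserves_omega_def
  proof (intro ballI)
    fix v u :: "'a svec" assume v: "v \<in> vecs n" and u: "u \<in> vecs n"
    have "omega (tv w c v) (tv w c u) = omega v u + c * omega w u * omega v w
       + c * omega w v * omega w u"
      using assms u v by (simp add: tv_def omega_vadd_right omega_vadd_left
           omega_vscale_right omega_vscale_left algebra_simps)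
    also have "\<dots> = omega v u" using omega_antisym[of v w] by (simp add: algebra_simps)
    finally show "omega (tv w c v) (tv w c u) = omega v u" .
  qed
  show "\<forall>v\<in>vecs n. tv w (- c) (v::'a svec) \<in> vecs n" using assms by (simp add: tv_def)
  show "\<forall>v\<in>vecs n. tv w (- c) (tv w c v) = (v::'a svec)" using assms by (auto intro: tv_inv)
  show "\<forall>v\<in>vecs n. tv w c (tv w (-c) v) = (v::'a svec)" using assms tv_inv[of w n _ "-c"] by simp
qed



definition vsub :: "('a::field) svec \<Rightarrow> 'a svec \<Rightarrow> 'a svec" where
  "vsub v w = vadd v (vscale (-1) w)"

definition EE :: "nat \<Rightarrow> ('a::field) svec" where "EE n = (1,0) # vzero (n-1)"
definition FF :: "nat \<Rightarrow> ('a::field) svec" where "FF n = (0,1) # vzero (n-1)"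

lemma len_EE[simp]: "n > 0 \<Longrightarrow> length (EE n) = n" by (simp add: EE_def)
lemma len_FF[simp]: "n > 0 \<Longrightarrow> length (FF n) = n" by (simp add: FF_def)
lemma len_vsub[simp]: "length (vsub v w) = min (length v) (length w)" by (simp add: vsub_def)

lemma EE_nz: "n > 0 \<Longrightarrow> EE n \<noteq> vzero n"
  by (cases n) (auto simp: EE_def vzero_Suc)

lemma omega_vsub_left: "length u = length w \<Longrightarrow> length v = length w \<Longrightarrow>
   omega (vsub u v) w = omega u w - omega v (w::('a::field) svec)"
  by (simp add: vsub_def omega_vadd_left omega_vscale_left)
lemma omega_vsub_right: "length u = length w \<Longrightarrow> length v = length w \<Longrightarrow>
   omega w (vsub u v) = omega w u - omega w (v::('a::field) svec)"
  by (simp add: vsub_def omega_vadd_right omega_vscale_right)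

lemma nondeg: "length s = n \<Longrightarrow> s \<noteq> vzero n \<Longrightarrow> \<exists>u. length u = n \<and> omega s u \<noteq> (0::'a::field)"
proof (induction s arbitrary: n)
  case Nil then show ?case by simp
next
  case (Cons p s)
  obtain z x where p: "p = (z,x)" by (cases p)
  obtain n' where n: "n = Suc n'" using Cons by (cases n) auto
  show ?case
  proof (cases "p = (0,0)")
    case True
    then have "s \<noteq> vzero n'" using Cons n by (auto simp: vzero_Suc)
    then obtain u where "length u = n'" "omega s u \<noteq> 0" using Cons n by auto
    then show ?thesis using True n by (intro exI[of _ "(0,0)#u"]) auto
  next
    case False
    show ?thesis
    proof (cases "z = 0")
      case True
      then have "x \<noteq> 0" using False p by auto
      then show ?thesis using True p n Cons by (intro exI[of _ "(1,0)#vzero n'"]) auto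
    next
      case False
      then show ?thesis using p n Cons by (intro exI[of _ "(0,1)#vzero n'"]) auto
    qed
  qed
qed

lemma step_map:
  fixes s t :: "('a::field) svec"
  assumes "length s = n" "length t = n" "omega t s \<noteq> 0"
  shows "\<exists>S. lin_symp n S \<and> S s = t \<and> (\<forall>x. length x = n \<longrightarrow> omega (vsub s t) x = 0 \<longrightarrow> S x = x)"
proof -
  define w where "w = vsub s t"
  define c where "c = 1 / omega t s"
  have lw: "length w = n" using assms by (simp add: w_def)
  have ows: "omega w s = - omega t s" using assms by (simp add: w_def omega_vsub_left)
  have "c * omega w s = -1" using assms by (simp add: ows c_def)
  then have "tv w c s = t" using assms
    by (simp add: tv_def w_def vsub_def) (rule nth_equalityI, auto simp: nth_vadd nth_vscale)
  moreover have "\<forall>x. length x = n \<longrightarrow> omega w x = 0 \<longrightarrow> tv w c x = x"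
    using lw by (simp add: tv_def)
  ultimately show ?thesis using tv_lin_symp[OF lw, of c] unfolding w_def by blast
qed

lemma trans1:
  fixes s t :: "('a::field) svec"
  assumes "length s = n" "length t = n" "s \<noteq> vzero n" "t \<noteq> vzero n"
  shows "\<exists>S. lin_symp n S \<and> S s = t"
proof -
  obtain u1 where u1: "length u1 = n" "omega s u1 \<noteq> 0" using nondeg assms by blast
  obtain u2 where u2: "length u2 = n" "omega t u2 \<noteq> 0" using nondeg assms by blast
  have "\<exists>u. length u = n \<and> omega u s \<noteq> 0 \<and> omega t u \<noteq> 0"
  proof (cases "omega t u1 \<noteq> 0")
    case True then show ?thesis using u1 omega_antisym[of s u1] by auto
  next
    case f1: False
    show ?thesis
    proof (cases "omega u2 s \<noteq> 0")
      case True then show ?thesis using u2 by auto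
    next
      case False
      have "omega (vadd u1 u2) s = omega u1 s" using False u1 u2 assms by (simp add: omega_vadd_left)
      moreover have "omega t (vadd u1 u2) = omega t u2" using f1 u1 u2 assms by (simp add: omega_vadd_right)
      ultimately show ?thesis using u1 u2 omega_antisym[of s u1]
        by (intro exI[of _ "vadd u1 u2"]) auto
    qed
  qed
  then obtain u where u: "length u = n" "omega u s \<noteq> 0" "omega t u \<noteq> 0" by blast
  obtain S1 where S1: "lin_symp n S1" "S1 s = u" using step_map[OF assms(1) u(1,2)] by blast
  obtain S2 where S2: "lin_symp n S2" "S2 u = t" using step_map[OF u(1) assms(2) u(3)] by blast
  show ?thesis using S1 S2 lin_symp_comp[OF S1(1) S2(1)] by (intro exI[of _ "S2 \<circ> S1"]) auto
qed

lemma omega_EF: "n > 0 \<Longrightarrow> omega (EE n) (FF n) = (1::'a::field)"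
  "n > 0 \<Longrightarrow> omega (FF n) (EE n) = (-1::'a::field)"
  by (auto simp: EE_def FF_def)

lemma trans2:
  fixes a c :: "('a::field) svec"
  assumes "length a = n" "length c = n" "omega a c = 1"
  shows "\<exists>S. lin_symp n S \<and> S a = EE n \<and> S c = FF n"
proof -
  have n: "n > 0" using assms by (cases a) auto
  have "a \<noteq> vzero n"
  proof
    assume "a = vzero n" then have "omega a c = 0" by simp
    with assms show False by simp
  qed
  then obtain S1 where S1: "lin_symp n S1" "S1 a = EE n"
    using trans1[OF assms(1) _ _ EE_nz[OF n]] n by auto
  define c1 where "c1 = S1 c"
  have lc1: "length c1 = n" using S1 assms lin_symp_vecs unfolding c1_def by fastforce
  have oc1: "omega (EE n) c1 = 1" using S1 assms lin_symp_omega[OF S1(1), of a c]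
    by (simp add: c1_def)
  have oc1': "omega c1 (EE n) = -1" using oc1 omega_antisym[of c1 "EE n"] by simp
  have "\<exists>S. lin_symp n S \<and> S c1 = FF n \<and> S (EE n) = EE n"
  proof (cases "omega (FF n) c1 = 0")
    case False
    obtain S where S: "lin_symp n S" "S c1 = FF n"
      "\<forall>x. length x = n \<longrightarrow> omega (vsub c1 (FF n)) x = 0 \<longrightarrow> S x = x"
      using step_map[OF lc1 _ False] n by auto
    have "omega (vsub c1 (FF n)) (EE n) = 0" using n lc1 oc1'
      by (simp add: omega_vsub_left omega_EF)
    then show ?thesis using S n by auto
  next
    case True
    define G :: "'a svec" where "G = vadd (EE n) (FF n)"
    have lG: "length G = n" using n by (simp add: G_def)
    have "omega G c1 = 1" using True oc1 n lc1 by (simp add: G_def omega_vadd_left)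
    then obtain S where S: "lin_symp n S" "S c1 = G"
      "\<forall>x. length x = n \<longrightarrow> omega (vsub c1 G) x = 0 \<longrightarrow> S x = x"
      using step_map[OF lc1 lG] by auto
    have "omega (vsub c1 G) (EE n) = 0" using n lc1 oc1'
      by (simp add: G_def omega_vsub_left omega_vadd_left omega_EF)
    then have SE: "S (EE n) = EE n" using S n by auto
    have "omega (FF n) G = -1" using n by (simp add: G_def omega_vadd_right omega_EF)
    then obtain S' where S': "lin_symp n S'" "S' G = FF n"
      "\<forall>x. length x = n \<longrightarrow> omega (vsub G (FF n)) x = 0 \<longrightarrow> S' x = x"
      using step_map[OF lG, of "FF n"] n by auto
    have "omega (vsub G (FF n)) (EE n) = 0" using n
      by (simp add: G_def omega_vsub_left omega_vadd_left omega_EF)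
    then have "S' (EE n) = EE n" using S' n by auto
    then show ?thesis using S S' SE lin_symp_comp[OF S(1) S'(1)] by (intro exI[of _ "S' \<circ> S"]) auto
  qed
  then obtain S2 where S2: "lin_symp n S2" "S2 c1 = FF n" "S2 (EE n) = EE n" by blast
  show ?thesis using S1 S2 lin_symp_comp[OF S1(1) S2(1)] c1_def by (intro exI[of _ "S2 \<circ> S1"]) auto
qed



definition Pv :: "nat \<Rightarrow> ('a::zero) svec set" where
  "Pv r = {q. length q = r \<and> (\<forall>t\<in>set q. fst t = 0)}"

definition NF :: "nat \<Rightarrow> nat \<Rightarrow> nat \<Rightarrow> (('a::field) svec \<Rightarrow> 'a svec) \<Rightarrow> ('a svec \<Rightarrow> 'a svec)
   \<Rightarrow> ('a svec \<times> 'a svec) set" where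
  "NF n m k S T = {(v, T (u @ p)) | v u p q. length v = n \<and> length u = k \<and> p \<in> Pv (m-k)
      \<and> q \<in> Pv (n-k) \<and> S v = u @ q}"

lemma Prel_eq: "Prel r = {([], q) | q. q \<in> Pv r}"
proof -
  have hm: "q \<in> Pv r \<Longrightarrow> q = map (\<lambda>x. (0, x)) (map snd q)" for q :: "'a svec"
    by (rule nth_equalityI) (auto simp: Pv_def prod_eq_iff)
  show ?thesis
  proof (intro set_eqI iffI)
    fix x :: "'a svec \<times> 'a svec" assume "x \<in> Prel r"
    then obtain xs where "x = ([], map (\<lambda>x. (0, x)) xs)" "length xs = r" unfolding Prel_def by blast
    moreover have "map (\<lambda>x. (0::'a, x)) xs \<in> Pv (length xs)" by (auto simp: Pv_def)
    ultimately show "x \<in> {([], q) | q. q \<in> Pv r}" by blast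
  next
    fix x :: "'a svec \<times> 'a svec" assume "x \<in> {([], q) | q. q \<in> Pv r}"
    then obtain q where "x = ([], q)" "q \<in> Pv r" by blast
    moreover have "length (map snd q) = r" using \<open>q \<in> Pv r\<close> by (simp add: Pv_def)
    ultimately show "x \<in> Prel r" unfolding Prel_def using hm by blast
  qed
qed

lemma negx_negx[simp]: "negx (negx q) = (q::('a::ring) svec)"
  by (simp add: negx_def case_prod_beta comp_def)
lemma negx_Pv: "q \<in> Pv r \<Longrightarrow> negx q \<in> (Pv r :: ('a::ring) svec set)"
  by (auto simp: Pv_def negx_def)
lemma negx_Nil[simp]: "negx [] = []" by (simp add: negx_def)

lemma dagger_Prel_eq: "dagger (Prel r) = {(q, []) | q. q \<in> (Pv r :: ('a::ring) svec set)}"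
proof (intro set_eqI iffI)
  fix x :: "'a svec \<times> 'a svec" assume "x \<in> dagger (Prel r)"
  then obtain q where "x = (negx q, [])" "q \<in> Pv r" unfolding dagger_def Prel_eq by auto
  then show "x \<in> {(q, []) | q. q \<in> (Pv r :: 'a svec set)}" using negx_Pv by blast
next
  fix x :: "'a svec \<times> 'a svec" assume "x \<in> {(q, []) | q. q \<in> (Pv r :: 'a svec set)}"
  then obtain q where q: "x = (q, [])" "q \<in> Pv r" by blast
  then have "([], negx q) \<in> Prel r" unfolding Prel_eq using negx_Pv by blast
  then have "(negx (negx q), negx []) \<in> dagger (Prel r)" unfolding dagger_def by blast
  then show "x \<in> dagger (Prel r)" using q by simp
qed

lemma rsum_iff: "(x,y) \<in> rsum R R' \<longleftrightarrow> (\<exists>a b a' b'. x = a@a' \<and> y = b@b' \<and> (a,b)\<in>R \<and> (a',b')\<in>R')"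
  unfolding rsum_def by blast
lemma idrel_iff: "(a,b) \<in> idrel k \<longleftrightarrow> a = b \<and> length a = k"
  unfolding idrel_def by auto
lemma dagPrel_iff: "(a,b) \<in> dagger (Prel r) \<longleftrightarrow> a \<in> (Pv r :: ('a::ring) svec set) \<and> b = []"
  unfolding dagger_Prel_eq by blast
lemma Prel_iff: "(a,b) \<in> Prel r \<longleftrightarrow> a = [] \<and> b \<in> (Pv r :: ('a::ring) svec set)"
  unfolding Prel_eq by blast
lemma graph_iff: "(a,b) \<in> graph n S \<longleftrightarrow> length a = n \<and> b = S a"
  unfolding graph_def by auto

lemma NF_I: "length v = n \<Longrightarrow> length u = k \<Longrightarrow> p \<in> Pv (m-k) \<Longrightarrow> q \<in> Pv (n-k) \<Longrightarrow>
  S v = u @ q \<Longrightarrow> (v, T (u@p)) \<in> NF n m k S T"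
  unfolding NF_def by blast

lemma NF_E: "x \<in> NF n m k S T \<Longrightarrow> (\<And>v u p q. x = (v, T (u@p)) \<Longrightarrow> length v = n \<Longrightarrow> length u = k \<Longrightarrow>
  p \<in> Pv (m-k) \<Longrightarrow> q \<in> Pv (n-k) \<Longrightarrow> S v = u @ q \<Longrightarrow> P) \<Longrightarrow> P"
  unfolding NF_def by blast

lemma comp_NF:
  fixes S T :: "('a::field) svec \<Rightarrow> 'a svec"
  assumes "k \<le> n" "k \<le> m"
  shows "graph n S O rsum (idrel k) (dagger (Prel (n - k))) O rsum (idrel k) (Prel (m - k)) O graph m T
    = NF n m k S T"
proof (intro set_eqI iffI)
  fix x assume "x \<in> graph n S O rsum (idrel k) (dagger (Prel (n - k))) O rsum (idrel k) (Prel (m - k)) O graph m T"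
  then obtain v y where x: "x = (v,y)"
    and m1: "(v,y) \<in> graph n S O rsum (idrel k) (dagger (Prel (n - k))) O rsum (idrel k) (Prel (m - k)) O graph m T"
    by (cases x) simp
  from m1 obtain w1 where 1: "(v,w1) \<in> graph n S"
    and m2: "(w1,y) \<in> rsum (idrel k) (dagger (Prel (n - k))) O rsum (idrel k) (Prel (m - k)) O graph m T"
    by (rule relcompEpair)
  from m2 obtain w2 where 2: "(w1,w2) \<in> rsum (idrel k) (dagger (Prel (n - k)))"
    and m3: "(w2,y) \<in> rsum (idrel k) (Prel (m - k)) O graph m T"
    by (rule relcompEpair)
  from m3 obtain w3 where 3: "(w2,w3) \<in> rsum (idrel k) (Prel (m - k))"
    and 4: "(w3,y) \<in> graph m T"
    by (rule relcompEpair)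
  from 1 have v: "length v = n" "w1 = S v" by (auto simp: graph_iff)
  from 2 obtain u q where "w1 = u @ q" "w2 = u" "length u = k" "q \<in> Pv (n-k)"
    by (auto simp: rsum_iff idrel_iff dagPrel_iff)
  moreover from 3 obtain u' p where "w2 = u'" "w3 = u' @ p" "p \<in> Pv (m-k)"
    by (auto simp: rsum_iff idrel_iff Prel_iff)
  moreover from 4 have "y = T w3" by (auto simp: graph_iff)
  ultimately have "S v = u @ q" "y = T (u @ p)" "length u = k" "p \<in> Pv (m-k)" "q \<in> Pv (n-k)"
    using v by auto
  then show "x \<in> NF n m k S T" unfolding x using NF_I[OF v(1)] by blast
next
  fix x assume "x \<in> NF n m k S T"
  then obtain v u p q where x: "x = (v, T (u @ p))" and h: "length v = n" "length u = k"
    "p \<in> Pv (m-k)" "q \<in> Pv (n-k)" "S v = u @ q" unfolding NF_def by blast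
  have 1: "(v, u@q) \<in> graph n S" using h by (auto simp: graph_iff)
  have 2: "(u@q, u@[]) \<in> rsum (idrel k) (dagger (Prel (n - k)))"
    unfolding rsum_iff idrel_iff dagPrel_iff using h by blast
  have 3: "(u@[], u@p) \<in> rsum (idrel k) (Prel (m - k))"
    unfolding rsum_iff idrel_iff Prel_iff using h by blast
  have "length p = m - k" using h by (simp add: Pv_def)
  then have 4: "(u@p, T (u@p)) \<in> graph m T" using h assms by (auto simp: graph_iff)
  show "x \<in> graph n S O rsum (idrel k) (dagger (Prel (n - k))) O rsum (idrel k) (Prel (m - k)) O graph m T"
    unfolding x by (rule relcompI[OF 1 relcompI[OF 2 relcompI[OF 3 4]]])
qed



lemma rel_omega_simp[simp]: "rel_omega (a,b) (c,d) = omega a c - omega b d"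
  by (simp add: rel_omega_def)
lemma padd_simp[simp]: "padd (a,b) (c,d) = (vadd a c, vadd b d)"
  by (simp add: padd_def)
lemma pscale_simp[simp]: "pscale t (a,b) = (vscale t a, vscale t b)"
  by (simp add: pscale_def)

lemma lag_iff: "lin_lagrangian_rel n m L \<longleftrightarrow> rel_lin_subspace n m L
   \<and> (\<forall>p\<in>L. \<forall>q\<in>L. rel_omega p q = 0)
   \<and> (\<forall>p. p \<in> vecs n \<times> vecs m \<longrightarrow> (\<forall>q\<in>L. rel_omega p q = 0) \<longrightarrow> p \<in> L)"
  unfolding lin_lagrangian_rel_def rel_omega_compl_def rel_lin_subspace_def
  by blast

lemma subspace_iff: "rel_lin_subspace n m L \<longleftrightarrow>
     (\<forall>a b. (a,b) \<in> L \<longrightarrow> length a = n \<and> length b = m) \<and> (vzero n, vzero m) \<in> L \<and>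
     (\<forall>a b c d. (a,b)\<in>L \<longrightarrow> (c,d)\<in>L \<longrightarrow> (vadd a c, vadd b d) \<in> L) \<and>
     (\<forall>t a b. (a,b)\<in>L \<longrightarrow> (vscale t a, vscale t b) \<in> L)"
  unfolding rel_lin_subspace_def by (auto simp: Ball_def split_paired_All padd_def pscale_def)

definition hasNF :: "nat \<Rightarrow> nat \<Rightarrow> (('a::field) svec \<times> 'a svec) set \<Rightarrow> bool" where
  "hasNF n m L \<longleftrightarrow> (\<exists>k S T. k \<le> min n m \<and> lin_symp n S \<and> lin_symp m T \<and> L = NF n m k S T)"

definition mapR :: "('a svec \<Rightarrow> 'a svec) \<Rightarrow> ('a svec \<Rightarrow> 'a svec) \<Rightarrow> ('a svec \<times> 'a svec) set
   \<Rightarrow> ('a svec \<times> 'a svec) set" where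
  "mapR S T L = (\<lambda>(a,b). (S a, T b)) ` L"

lemma mapR_iff: "(x,y) \<in> mapR S T L \<longleftrightarrow> (\<exists>a b. (a,b) \<in> L \<and> x = S a \<and> y = T b)"
  unfolding mapR_def by force

lemma lag_mapR:
  fixes L :: "(('a::field) svec \<times> 'a svec) set"
  assumes L: "lin_lagrangian_rel n m L" and S: "lin_symp n S" and T: "lin_symp m T"
  shows "lin_lagrangian_rel n m (mapR S T L)"
proof -
  have sub: "rel_lin_subspace n m L" and iso: "\<forall>p\<in>L. \<forall>q\<in>L. rel_omega p q = 0"
    and co: "\<forall>p. p \<in> vecs n \<times> vecs m \<longrightarrow> (\<forall>q\<in>L. rel_omega p q = 0) \<longrightarrow> p \<in> L"
    using L unfolding lag_iff by auto
  have lenL: "\<And>a b. (a,b) \<in> L \<Longrightarrow> length a = n \<and> length b = m" using sub unfolding subspace_iff by blast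
  have Sz: "S (vzero n) = vzero n" using S lin_map_zero by (auto simp: lin_symp_def)
  have Tz: "T (vzero m) = vzero m" using T lin_map_zero by (auto simp: lin_symp_def)
  have s1: "\<forall>a b. (a,b) \<in> mapR S T L \<longrightarrow> length a = n \<and> length b = m"
    using lenL lin_symp_vecs[OF S] lin_symp_vecs[OF T] by (auto simp: mapR_iff)
  have s2: "(vzero n, vzero m) \<in> mapR S T L" using sub Sz Tz unfolding mapR_iff subspace_iff by metis
  have s3: "\<forall>a b c d. (a,b) \<in> mapR S T L \<longrightarrow> (c,d) \<in> mapR S T L \<longrightarrow> (vadd a c, vadd b d) \<in> mapR S T L"
  proof (intro allI impI)
    fix a b c d assume "(a,b) \<in> mapR S T L" "(c,d) \<in> mapR S T L"
    then obtain a' b' c' d' where h: "(a',b') \<in> L" "(c',d') \<in> L" "a = S a'" "b = T b'" "c = S c'" "d = T d'"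
      by (auto simp: mapR_iff)
    moreover then have "(vadd a' c', vadd b' d') \<in> L" using sub unfolding subspace_iff by blast
    moreover have "S (vadd a' c') = vadd a c" "T (vadd b' d') = vadd b d"
      using h lenL lin_symp_add[OF S] lin_symp_add[OF T] by auto
    ultimately show "(vadd a c, vadd b d) \<in> mapR S T L"
      unfolding mapR_iff by metis
  qed
  have s4: "\<forall>t a b. (a,b) \<in> mapR S T L \<longrightarrow> (vscale t a, vscale t b) \<in> mapR S T L"
  proof (intro allI impI)
    fix t a b assume "(a,b) \<in> mapR S T L"
    then obtain a' b' where h: "(a',b') \<in> L" "a = S a'" "b = T b'"
      by (auto simp: mapR_iff)
    moreover then have "(vscale t a', vscale t b') \<in> L" using sub unfolding subspace_iff by blast
    moreover have "S (vscale t a') = vscale t a" "T (vscale t b') = vscale t b"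
      using h lenL lin_symp_scale[OF S] lin_symp_scale[OF T] by auto
    ultimately show "(vscale t a, vscale t b) \<in> mapR S T L"
      unfolding mapR_iff by metis
  qed
  have "rel_lin_subspace n m (mapR S T L)" unfolding subspace_iff using s1 s2 s3 s4 by blast
  moreover have "\<forall>p\<in>mapR S T L. \<forall>q\<in>mapR S T L. rel_omega p q = 0"
  proof (intro ballI)
    fix p q assume pq: "p \<in> mapR S T L" "q \<in> mapR S T L"
    obtain x y z w where xy: "p = (x,y)" "q = (z,w)" by (cases p, cases q)
    obtain a b c d where "(a,b) \<in> L" "(c,d) \<in> L" "p = (S a, T b)" "q = (S c, T d)"
      using pq unfolding xy mapR_iff by blast
    then have "rel_omega p q = omega a c - omega b d"
      using lenL lin_symp_omega[OF S, of a c] lin_symp_omega[OF T, of b d] by simp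
    also have "\<dots> = rel_omega (a,b) (c,d)" by simp
    also have "\<dots> = 0" using iso \<open>(a,b) \<in> L\<close> \<open>(c,d) \<in> L\<close> by blast
    finally show "rel_omega p q = 0" .
  qed
  moreover have "\<forall>p. p \<in> vecs n \<times> vecs m \<longrightarrow> (\<forall>q\<in>mapR S T L. rel_omega p q = 0) \<longrightarrow> p \<in> mapR S T L"
  proof (intro allI impI)
    fix p assume p: "p \<in> vecs n \<times> vecs m" and o: "\<forall>q\<in>mapR S T L. rel_omega p q = 0"
    obtain x y where xy: "p = (x,y)" by (cases p)
    obtain Si where Si: "lin_symp n Si" "\<forall>v\<in>vecs n. Si (S v) = v" "\<forall>v\<in>vecs n. S (Si v) = v"
      using lin_symp_inv[OF S] by blast
    obtain Ti where Ti: "lin_symp m Ti" "\<forall>v\<in>vecs m. Ti (T v) = v" "\<forall>v\<in>vecs m. T (Ti v) = v"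
      using lin_symp_inv[OF T] by blast
    have lx: "length x = n" "length y = m" using p xy by auto
    have "(Si x, Ti y) \<in> L"
    proof (rule co[rule_format])
      show "(Si x, Ti y) \<in> vecs n \<times> vecs m" using lx lin_symp_vecs[OF Si(1)] lin_symp_vecs[OF Ti(1)] by auto
    next
      fix q assume q: "q \<in> L"
      obtain c d where cd: "q = (c,d)" by (cases q)
      have lcd: "length c = n" "length d = m" using lenL q cd by auto
      have "(S c, T d) \<in> mapR S T L" using q cd unfolding mapR_iff by blast
      then have "rel_omega (x,y) (S c, T d) = 0" using o xy by blast
      then have "omega x (S c) - omega y (T d) = 0" by simp
      moreover have "omega (Si x) c = omega x (S c)"
        using lin_symp_omega[OF S, of "Si x" c] lx lcd lin_symp_vecs[OF Si(1)] Si(3) by auto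
      moreover have "omega (Ti y) d = omega y (T d)"
        using lin_symp_omega[OF T, of "Ti y" d] lx lcd lin_symp_vecs[OF Ti(1)] Ti(3) by auto
      ultimately show "rel_omega (Si x, Ti y) q = 0" using cd by simp
    qed
    moreover have "x = S (Si x)" "y = T (Ti y)" using Si(3) Ti(3) lx by auto
    ultimately show "p \<in> mapR S T L" unfolding mapR_iff xy by blast
  qed
  ultimately show ?thesis unfolding lag_iff by blast
qed



definition swapR :: "('b \<times> 'b) set \<Rightarrow> ('b \<times> 'b) set" where
  "swapR L = (\<lambda>(a,b). (b,a)) ` L"

lemma swapR_iff[simp]: "(x,y) \<in> swapR L \<longleftrightarrow> (y,x) \<in> L"
  unfolding swapR_def by force

lemma swapR_swapR[simp]: "swapR (swapR L) = L"
  by (auto simp: set_eq_iff)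

lemma lag_swap:
  fixes L :: "(('a::field) svec \<times> 'a svec) set"
  assumes L: "lin_lagrangian_rel n m L"
  shows "lin_lagrangian_rel m n (swapR L)"
proof -
  have sub: "rel_lin_subspace n m L" and iso: "\<forall>p\<in>L. \<forall>q\<in>L. rel_omega p q = 0"
    and co: "\<forall>p. p \<in> vecs n \<times> vecs m \<longrightarrow> (\<forall>q\<in>L. rel_omega p q = 0) \<longrightarrow> p \<in> L"
    using L unfolding lag_iff by auto
  have "rel_lin_subspace m n (swapR L)" using sub unfolding subspace_iff by simp
  moreover have "\<forall>p\<in>swapR L. \<forall>q\<in>swapR L. rel_omega p q = 0"
  proof (intro ballI)
    fix p q assume pq: "p \<in> swapR L" "q \<in> swapR L"
    obtain x y z w where xy: "p = (x,y)" "q = (z,w)" by (cases p, cases q)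
    have "(y,x) \<in> L" "(w,z) \<in> L" using pq xy by simp_all
    then have "rel_omega (y,x) (w,z) = 0" using iso by blast
    then have "omega y w - omega x z = 0" by simp
    then show "rel_omega p q = 0" using xy by (simp add: algebra_simps)
  qed
  moreover have "\<forall>p. p \<in> vecs m \<times> vecs n \<longrightarrow> (\<forall>q\<in>swapR L. rel_omega p q = 0) \<longrightarrow> p \<in> swapR L"
  proof (intro allI impI)
    fix p assume p: "p \<in> vecs m \<times> vecs n" and o: "\<forall>q\<in>swapR L. rel_omega p q = 0"
    obtain x y where xy: "p = (x,y)" by (cases p)
    have "(y,x) \<in> L"
    proof (rule co[rule_format])
      show "(y,x) \<in> vecs n \<times> vecs m" using p xy by auto
    next
      fix q assume q: "q \<in> L"
      obtain c d where cd: "q = (c,d)" by (cases q)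
      have "(d,c) \<in> swapR L" using q cd by simp
      then have "rel_omega (x,y) (d,c) = 0" using o xy by blast
      then show "rel_omega (y,x) q = 0" using cd by (simp add: algebra_simps)
    qed
    then show "p \<in> swapR L" using xy by simp
  qed
  ultimately show ?thesis unfolding lag_iff by blast
qed

lemma NF_swap:
  fixes S T :: "('a::field) svec \<Rightarrow> 'a svec"
  assumes k: "k \<le> min n m" and S: "lin_symp n S" and T: "lin_symp m T"
  shows "hasNF m n (swapR (NF n m k S T))"
proof -
  obtain Si where Si: "lin_symp n Si" "\<forall>v\<in>vecs n. Si (S v) = v" "\<forall>v\<in>vecs n. S (Si v) = v"
    using lin_symp_inv[OF S] by blast
  obtain Ti where Ti: "lin_symp m Ti" "\<forall>v\<in>vecs m. Ti (T v) = v" "\<forall>v\<in>vecs m. T (Ti v) = v"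
    using lin_symp_inv[OF T] by blast
  have "swapR (NF n m k S T) = NF m n k Ti Si"
  proof (intro set_eqI iffI)
    fix x assume "x \<in> swapR (NF n m k S T)"
    then obtain w v where x: "x = (w,v)" and vw: "(v,w) \<in> NF n m k S T" by (cases x) simp
    from vw obtain v' u p q where e: "(v,w) = (v', T (u@p))" and h: "length v' = n" "length u = k"
      "p \<in> Pv (m-k)" "q \<in> Pv (n-k)" "S v' = u @ q" by (rule NF_E)
    have lup: "length (u@p) = m" "length (u@q) = n" using h k by (auto simp: Pv_def)
    have "Ti w = u @ p" using e Ti(2) lup by auto
    moreover have "v = Si (u@q)" using e h Si(2) by (metis Pair_inject vecs_iff)
    moreover have "length w = m" using e lin_symp_vecs[OF T] lup by auto
    ultimately show "x \<in> NF m n k Ti Si" unfolding x using NF_I[of w m u k q n p Ti Si] h by simp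
  next
    fix x assume "x \<in> NF m n k Ti Si"
    then obtain w u p q where x: "x = (w, Si (u@p))" and h: "length w = m" "length u = k"
      "p \<in> Pv (n-k)" "q \<in> Pv (m-k)" "Ti w = u @ q" by (rule NF_E)
    have lup: "length (u@p) = n" "length (u@q) = m" using h k by (auto simp: Pv_def)
    have "w = T (u @ q)" using h Ti(3) by (metis vecs_iff)
    moreover have "S (Si (u@p)) = u@p" using Si(3) lup by auto
    moreover have "length (Si (u@p)) = n" using lin_symp_vecs[OF Si(1)] lup by auto
    ultimately have "(Si (u@p), w) \<in> NF n m k S T" using NF_I[of "Si (u@p)" n u k q m p S T] h by simp
    then show "x \<in> swapR (NF n m k S T)" unfolding x by simp
  qed
  then show ?thesis unfolding hasNF_def using k Si(1) Ti(1) by (metis min.commute)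
qed

lemma NF_transport:
  fixes L :: "(('a::field) svec \<times> 'a svec) set"
  assumes L: "lin_lagrangian_rel n m L" and S0: "lin_symp n S0" and T0: "lin_symp m T0"
    and N: "hasNF n m (mapR S0 T0 L)"
  shows "hasNF n m L"
proof -
  obtain k S T where k: "k \<le> min n m" and S: "lin_symp n S" and T: "lin_symp m T"
    and eq: "mapR S0 T0 L = NF n m k S T" using N unfolding hasNF_def by blast
  obtain T0i where T0i: "lin_symp m T0i" "\<forall>v\<in>vecs m. T0i (T0 v) = v" "\<forall>v\<in>vecs m. T0 (T0i v) = v"
    using lin_symp_inv[OF T0] by blast
  have lenL: "\<And>a b. (a,b) \<in> L \<Longrightarrow> length a = n \<and> length b = m"
    using L unfolding lag_iff subspace_iff by blast
  have "L = NF n m k (S \<circ> S0) (T0i \<circ> T)"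
  proof (intro set_eqI iffI)
    fix x assume xL: "x \<in> L"
    obtain a b where x: "x = (a,b)" by (cases x)
    have lab: "length a = n" "length b = m" using lenL xL x by auto
    have "(S0 a, T0 b) \<in> mapR S0 T0 L" using xL x unfolding mapR_iff by blast
    then have "(S0 a, T0 b) \<in> NF n m k S T" using eq by simp
    then obtain v u p q where e: "(S0 a, T0 b) = (v, T (u@p))" and h: "length v = n" "length u = k"
      "p \<in> Pv (m-k)" "q \<in> Pv (n-k)" "S v = u @ q" by (rule NF_E)
    have "b = T0i (T (u@p))" using e T0i(2) lab by (metis Pair_inject vecs_iff)
    moreover have "(S \<circ> S0) a = u @ q" using e h by simp
    ultimately show "x \<in> NF n m k (S \<circ> S0) (T0i \<circ> T)"
      unfolding x using NF_I[of a n u k p m q "S \<circ> S0" "T0i \<circ> T"] h lab by simp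
  next
    fix x assume "x \<in> NF n m k (S \<circ> S0) (T0i \<circ> T)"
    then obtain a u p q where x: "x = (a, (T0i \<circ> T) (u@p))" and h: "length a = n" "length u = k"
      "p \<in> Pv (m-k)" "q \<in> Pv (n-k)" "(S \<circ> S0) a = u @ q" by (rule NF_E)
    have "length (S0 a) = n" using lin_symp_vecs[OF S0] h by auto
    then have "(S0 a, T (u@p)) \<in> NF n m k S T" using NF_I[of "S0 a" n u k p m q S T] h by simp
    then have "(S0 a, T (u@p)) \<in> mapR S0 T0 L" using eq by simp
    then obtain a' b' where ab: "(a',b') \<in> L" "S0 a' = S0 a" "T (u@p) = T0 b'" unfolding mapR_iff by metis
    have "a' = a" using lin_symp_inj[OF S0] ab lenL h by (metis vecs_iff)
    moreover have "b' = T0i (T (u@p))" using ab T0i(2) lenL by (metis vecs_iff)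
    ultimately show "x \<in> L" using x ab by simp
  qed
  then show ?thesis unfolding hasNF_def using k lin_symp_comp[OF S0 S] lin_symp_comp[OF T T0i(1)] by blast
qed

lemma lag_trivial:
  fixes L :: "(('a::field) svec \<times> 'a svec) set"
  assumes L: "lin_lagrangian_rel n m L" and sub: "L \<subseteq> {(vzero n, vzero m)}"
  shows "n = 0 \<and> m = 0"
proof -
  have co: "\<forall>p. p \<in> vecs n \<times> vecs m \<longrightarrow> (\<forall>q\<in>L. rel_omega p q = 0) \<longrightarrow> p \<in> L"
    using L unfolding lag_iff by auto
  have n: "n = 0"
  proof (rule ccontr)
    assume "n \<noteq> 0"
    have "(EE n, vzero m) \<in> L"
    proof (rule co[rule_format])
      show "(EE n, vzero m) \<in> vecs n \<times> vecs m" using \<open>n \<noteq> 0\<close> by simp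
      fix q assume "q \<in> L" then have "q = (vzero n, vzero m)" using sub by auto
      then show "rel_omega (EE n, vzero m) q = 0" by simp
    qed
    then show False using sub EE_nz[of n] \<open>n \<noteq> 0\<close> by auto
  qed
  have m: "m = 0"
  proof (rule ccontr)
    assume "m \<noteq> 0"
    have "(vzero n, EE m) \<in> L"
    proof (rule co[rule_format])
      show "(vzero n, EE m) \<in> vecs n \<times> vecs m" using \<open>m \<noteq> 0\<close> by simp
      fix q assume "q \<in> L" then have "q = (vzero n, vzero m)" using sub by auto
      then show "rel_omega (vzero n, EE m) q = 0" by simp
    qed
    then show False using sub EE_nz[of m] \<open>m \<noteq> 0\<close> by auto
  qed
  show ?thesis using n m by simp
qed



definition consmap :: "('a svec \<Rightarrow> 'a svec) \<Rightarrow> 'a svec \<Rightarrow> 'a svec" where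
  "consmap S v = hd v # S (tl v)"
definition snocmap :: "('a svec \<Rightarrow> 'a svec) \<Rightarrow> 'a svec \<Rightarrow> 'a svec" where
  "snocmap S v = S (butlast v) @ [last v]"

lemma len_Suc_cons: "length v = Suc n \<Longrightarrow> \<exists>a b v'. v = (a,b)#v' \<and> length v' = n"
  by (cases v) auto
lemma len_Suc_snoc: "\<exists>a b v'. v = v' @ [(a,b)] \<and> length v' = n" if "length v = Suc n"
proof (cases v rule: rev_cases)
  case (snoc ys y) then show ?thesis using that by (cases y) auto
qed (use that in simp)

lemma consmap_Cons[simp]: "consmap S (x#v) = x # S v" by (simp add: consmap_def)
lemma snocmap_snoc[simp]: "snocmap S (v@[x]) = S v @ [x]" by (simp add: snocmap_def)

lemma lin_symp_consmap:
  fixes S :: "('a::field) svec \<Rightarrow> 'a svec"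
  assumes S: "lin_symp n S" shows "lin_symp (Suc n) (consmap S)"
proof -
  obtain Si where Si: "lin_symp n Si" "\<forall>v\<in>vecs n. Si (S v) = v" "\<forall>v\<in>vecs n. S (Si v) = v"
    using lin_symp_inv[OF S] by blast
  show ?thesis
  proof (rule lin_symp_intro[where S'="consmap Si"])
    show "lin_map (Suc n) (consmap S)" unfolding lin_map_def
    proof (intro conjI ballI allI)
      fix v :: "'a svec" assume "v \<in> vecs (Suc n)"
      then obtain a b v' where "v = (a,b)#v'" "length v' = n" using len_Suc_cons by fastforce
      then show "consmap S v \<in> vecs (Suc n)" using lin_symp_vecs[OF S] by simp
    next
      fix v w :: "'a svec" assume "v \<in> vecs (Suc n)" "w \<in> vecs (Suc n)"
      then obtain a b v' c d w' where "v = (a,b)#v'" "length v' = n" "w = (c,d)#w'" "length w' = n"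
        using len_Suc_cons by (metis vecs_iff)
      then show "consmap S (vadd v w) = vadd (consmap S v) (consmap S w)"
        using lin_symp_add[OF S] by simp
    next
      fix c and v :: "'a svec" assume "v \<in> vecs (Suc n)"
      then obtain a b v' where "v = (a,b)#v'" "length v' = n" using len_Suc_cons by fastforce
      then show "consmap S (vscale c v) = vscale c (consmap S v)"
        using lin_symp_scale[OF S] by simp
    qed
    show "preserves_omega (Suc n) (consmap S)" unfolding preserves_omega_def
    proof (intro ballI)
      fix v w :: "'a svec" assume "v \<in> vecs (Suc n)" "w \<in> vecs (Suc n)"
      then obtain a b v' c d w' where "v = (a,b)#v'" "length v' = n" "w = (c,d)#w'" "length w' = n"
        using len_Suc_cons by (metis vecs_iff)
      then show "omega (consmap S v) (consmap S w) = omega v w"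
        using lin_symp_omega[OF S] by simp
    qed
    show "\<forall>v\<in>vecs (Suc n). consmap Si v \<in> vecs (Suc n)"
    proof
      fix v :: "'a svec" assume "v \<in> vecs (Suc n)"
      then obtain a b v' where "v = (a,b)#v'" "length v' = n" using len_Suc_cons by fastforce
      then show "consmap Si v \<in> vecs (Suc n)" using lin_symp_vecs[OF Si(1)] by simp
    qed
    show "\<forall>v\<in>vecs (Suc n). consmap Si (consmap S v) = v"
    proof
      fix v :: "'a svec" assume "v \<in> vecs (Suc n)"
      then obtain a b v' where "v = (a,b)#v'" "length v' = n" using len_Suc_cons by fastforce
      then show "consmap Si (consmap S v) = v" using Si by simp
    qed
    show "\<forall>v\<in>vecs (Suc n). consmap S (consmap Si v) = v"
    proof
      fix v :: "'a svec" assume "v \<in> vecs (Suc n)"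
      then obtain a b v' where "v = (a,b)#v'" "length v' = n" using len_Suc_cons by fastforce
      then show "consmap S (consmap Si v) = v" using Si by simp
    qed
  qed
qed

lemma lin_symp_snocmap:
  fixes S :: "('a::field) svec \<Rightarrow> 'a svec"
  assumes S: "lin_symp n S" shows "lin_symp (Suc n) (snocmap S)"
proof -
  obtain Si where Si: "lin_symp n Si" "\<forall>v\<in>vecs n. Si (S v) = v" "\<forall>v\<in>vecs n. S (Si v) = v"
    using lin_symp_inv[OF S] by blast
  show ?thesis
  proof (rule lin_symp_intro[where S'="snocmap Si"])
    show "lin_map (Suc n) (snocmap S)" unfolding lin_map_def
    proof (intro conjI ballI allI)
      fix v :: "'a svec" assume "v \<in> vecs (Suc n)"
      then obtain a b v' where "v = v'@[(a,b)]" "length v' = n" using len_Suc_snoc by fastforce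
      then show "snocmap S v \<in> vecs (Suc n)" using lin_symp_vecs[OF S] by simp
    next
      fix v w :: "'a svec" assume "v \<in> vecs (Suc n)" "w \<in> vecs (Suc n)"
      then obtain a b v' c d w' where "v = v'@[(a,b)]" "length v' = n" "w = w'@[(c,d)]" "length w' = n"
        using len_Suc_snoc by (metis vecs_iff)
      then show "snocmap S (vadd v w) = vadd (snocmap S v) (snocmap S w)"
        using lin_symp_add[OF S] lin_symp_vecs[OF S] by (simp add: vadd_append)
    next
      fix c and v :: "'a svec" assume "v \<in> vecs (Suc n)"
      then obtain a b v' where "v = v'@[(a,b)]" "length v' = n" using len_Suc_snoc by fastforce
      then show "snocmap S (vscale c v) = vscale c (snocmap S v)"
        using lin_symp_scale[OF S] by (simp add: vscale_append)
    qed
    show "preserves_omega (Suc n) (snocmap S)" unfolding preserves_omega_def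
    proof (intro ballI)
      fix v w :: "'a svec" assume "v \<in> vecs (Suc n)" "w \<in> vecs (Suc n)"
      then obtain a b v' c d w' where "v = v'@[(a,b)]" "length v' = n" "w = w'@[(c,d)]" "length w' = n"
        using len_Suc_snoc by (metis vecs_iff)
      then show "omega (snocmap S v) (snocmap S w) = omega v w"
        using lin_symp_omega[OF S] lin_symp_vecs[OF S] by (simp add: omega_append)
    qed
    show "\<forall>v\<in>vecs (Suc n). snocmap Si v \<in> vecs (Suc n)"
    proof
      fix v :: "'a svec" assume "v \<in> vecs (Suc n)"
      then obtain a b v' where "v = v'@[(a,b)]" "length v' = n" using len_Suc_snoc by fastforce
      then show "snocmap Si v \<in> vecs (Suc n)" using lin_symp_vecs[OF Si(1)] by simp
    qed
    show "\<forall>v\<in>vecs (Suc n). snocmap Si (snocmap S v) = v"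
    proof
      fix v :: "'a svec" assume "v \<in> vecs (Suc n)"
      then obtain a b v' where "v = v'@[(a,b)]" "length v' = n" using len_Suc_snoc by fastforce
      then show "snocmap Si (snocmap S v) = v" using Si by simp
    qed
    show "\<forall>v\<in>vecs (Suc n). snocmap S (snocmap Si v) = v"
    proof
      fix v :: "'a svec" assume "v \<in> vecs (Suc n)"
      then obtain a b v' where "v = v'@[(a,b)]" "length v' = n" using len_Suc_snoc by fastforce
      then show "snocmap S (snocmap Si v) = v" using Si by simp
    qed
  qed
qed



lemma Pv_snoc: "q @ [t] \<in> Pv (Suc r) \<longleftrightarrow> q \<in> Pv r \<and> fst t = 0"
  by (auto simp: Pv_def)
lemma Pv_len: "q \<in> Pv r \<Longrightarrow> length q = r" by (simp add: Pv_def)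

lemma caseA:
  fixes L :: "(('a::field) svec \<times> 'a svec) set"
  assumes L: "lin_lagrangian_rel (Suc n) m L"
    and e: "(vzero n @ [(0,1)], vzero m) \<in> L"
    and IH: "\<And>L' :: ('a svec \<times> 'a svec) set. lin_lagrangian_rel n m L' \<Longrightarrow> hasNF n m L'"
  shows "hasNF (Suc n) m L"
proof -
  define e where "e = (vzero n @ [(0::'a,1::'a)], vzero m :: 'a svec)"
  have sub: "rel_lin_subspace (Suc n) m L" and iso: "\<forall>p\<in>L. \<forall>q\<in>L. rel_omega p q = 0"
    and co: "\<forall>p. p \<in> vecs (Suc n) \<times> vecs m \<longrightarrow> (\<forall>q\<in>L. rel_omega p q = 0) \<longrightarrow> p \<in> L"
    using L unfolding lag_iff by auto
  have lenL: "\<And>a b. (a,b) \<in> L \<Longrightarrow> length a = Suc n \<and> length b = m"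
    and zL: "(vzero (Suc n), vzero m) \<in> L"
    and addL: "\<And>a b c d. (a,b)\<in>L \<Longrightarrow> (c,d)\<in>L \<Longrightarrow> (vadd a c, vadd b d) \<in> L"
    and scL: "\<And>t a b. (a,b)\<in>L \<Longrightarrow> (vscale t a, vscale t b) \<in> L"
    using sub unfolding subspace_iff by blast+
  have cl1: "\<exists>a' x. a = a' @ [(0,x)] \<and> length a' = n" if ab: "(a,b) \<in> L" for a b
  proof -
    obtain z x a' where a: "a = a' @ [(z,x)]" "length a' = n" using len_Suc_snoc lenL ab by blast
    have "rel_omega (a,b) (vzero n @ [(0,1)], vzero m) = 0" using iso ab e by blast
    then have "z = 0" using a lenL ab by (simp add: omega_append)
    then show ?thesis using a by blast
  qed
  define L2 where "L2 = {(a',b) | a' b x. (a' @ [(0::'a,x)], b) \<in> L}"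
  have L2_iff: "(a',b) \<in> L2 \<longleftrightarrow> (\<exists>x. (a' @ [(0,x)], b) \<in> L)" for a' b
    unfolding L2_def by blast
  have lenL2: "length a' = n \<and> length b = m" if hh: "(a',b) \<in> L2" for a' b
  proof -
    obtain x where "(a' @ [(0,x)], b) \<in> L" using hh unfolding L2_iff by blast
    then show ?thesis using lenL by fastforce
  qed
  have cl2: "(a' @ [(0,x)], b) \<in> L" if hh: "(a',b) \<in> L2" for a' b x
  proof -
    obtain y where y: "(a' @ [(0,y)], b) \<in> L" using hh L2_iff by blast
    have la: "length a' = n" "length b = m" using lenL2 hh by auto
    have "(vscale (x-y) (vzero n @ [(0,1)]), vscale (x-y) (vzero m)) \<in> L" using scL e by blast
    then have "(vadd (a' @ [(0,y)]) (vscale (x-y) (vzero n @ [(0,1)])), vadd b (vscale (x-y) (vzero m))) \<in> L"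
      using addL y by blast
    then show ?thesis using la by (simp add: vscale_append vadd_append)
  qed
  have LagL2: "lin_lagrangian_rel n m L2"
    unfolding lag_iff
  proof (intro conjI)
    show "rel_lin_subspace n m L2" unfolding subspace_iff
    proof (intro conjI allI impI)
      fix a b assume "(a,b) \<in> L2" then show "length a = n" using lenL2 by blast
    next
      fix a b assume "(a,b) \<in> L2" then show "length b = m" using lenL2 by blast
    next
      show "(vzero n, vzero m) \<in> L2" using zL unfolding L2_iff vzero_Suc' by blast
    next
      fix a b c d assume "(a,b) \<in> L2" "(c,d) \<in> L2"
      then obtain x y where "(a @ [(0,x)], b) \<in> L" "(c @ [(0,y)], d) \<in> L" "length a = n" "length c = n"
        using lenL2 unfolding L2_iff by blast
      then have "(vadd (a @ [(0,x)]) (c @ [(0,y)]), vadd b d) \<in> L" using addL by blast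
      then have "(vadd a c @ [(0, x+y)], vadd b d) \<in> L" using \<open>length a = n\<close> \<open>length c = n\<close>
        by (simp add: vadd_append)
      then show "(vadd a c, vadd b d) \<in> L2" unfolding L2_iff by blast
    next
      fix t a b assume "(a,b) \<in> L2"
      then obtain x where "(a @ [(0,x)], b) \<in> L" using L2_iff by blast
      then have "(vscale t (a @ [(0,x)]), vscale t b) \<in> L" using scL by blast
      then have "(vscale t a @ [(0, t*x)], vscale t b) \<in> L" by (simp add: vscale_append)
      then show "(vscale t a, vscale t b) \<in> L2" unfolding L2_iff by blast
    qed
  next
    show "\<forall>p\<in>L2. \<forall>q\<in>L2. rel_omega p q = 0"
    proof (intro ballI)
      fix p q assume pq: "p \<in> L2" "q \<in> L2"
      obtain a b c d where xy: "p = (a,b)" "q = (c,d)" by (cases p, cases q)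
      have "(a @ [(0,0)], b) \<in> L" "(c @ [(0,0)], d) \<in> L" using cl2 pq xy by auto
      then have "rel_omega (a @ [(0,0)], b) (c @ [(0,0)], d) = 0" using iso by blast
      moreover have "length a = n" "length c = n" using lenL2 pq xy by auto
      ultimately show "rel_omega p q = 0" using xy by (simp add: omega_append)
    qed
  next
    show "\<forall>p. p \<in> vecs n \<times> vecs m \<longrightarrow> (\<forall>q\<in>L2. rel_omega p q = 0) \<longrightarrow> p \<in> L2"
    proof (intro allI impI)
      fix p assume p: "p \<in> vecs n \<times> vecs m" and o: "\<forall>q\<in>L2. rel_omega p q = 0"
      obtain a b where ab: "p = (a,b)" by (cases p)
      have "(a @ [(0,0)], b) \<in> L"
      proof (rule co[rule_format])
        show "(a @ [(0,0)], b) \<in> vecs (Suc n) \<times> vecs m" using p ab by auto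
      next
        fix q assume q: "q \<in> L"
        obtain c d where cd: "q = (c,d)" by (cases q)
        obtain c' y where c: "c = c' @ [(0,y)]" "length c' = n" using cl1 q cd by blast
        have "(c',d) \<in> L2" using q cd c L2_iff by blast
        then have "rel_omega (a,b) (c',d) = 0" using o ab by blast
        then show "rel_omega (a @ [(0,0)], b) q = 0" using cd c p ab by (simp add: omega_append)
      qed
      then show "p \<in> L2" using ab L2_iff by blast
    qed
  qed
  obtain k S T where k: "k \<le> min n m" and S: "lin_symp n S" and T: "lin_symp m T"
    and eq: "L2 = NF n m k S T" using IH[OF LagL2] unfolding hasNF_def by blast
  have "L = NF (Suc n) m k (snocmap S) T"
  proof (intro set_eqI iffI)
    fix x assume xL: "x \<in> L"
    obtain a b where x: "x = (a,b)" by (cases x)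
    obtain a' y where a: "a = a' @ [(0,y)]" "length a' = n" using cl1 xL x by blast
    have "(a',b) \<in> L2" using L2_iff xL x a by blast
    then have "(a',b) \<in> NF n m k S T" using eq by simp
    then obtain v u p q where e2: "(a',b) = (v, T (u@p))" and h: "length v = n" "length u = k"
      "p \<in> Pv (m-k)" "q \<in> Pv (n-k)" "S v = u @ q" by (rule NF_E)
    have "snocmap S a = u @ (q @ [(0,y)])" using a h e2 by simp
    moreover have "q @ [(0,y)] \<in> Pv (Suc n - k)" using h k Pv_snoc[of q "(0,y)" "n-k"]
      by (simp add: Suc_diff_le)
    ultimately show "x \<in> NF (Suc n) m k (snocmap S) T"
      using NF_I[of a "Suc n" u k p m "q @ [(0,y)]" "snocmap S" T] x a h e2 by simp
  next
    fix x assume "x \<in> NF (Suc n) m k (snocmap S) T"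
    then obtain a u p q' where x: "x = (a, T (u@p))" and h: "length a = Suc n" "length u = k"
      "p \<in> Pv (m-k)" "q' \<in> Pv (Suc n-k)" "snocmap S a = u @ q'" by (rule NF_E)
    obtain z y a' where a: "a = a' @ [(z,y)]" "length a' = n" using len_Suc_snoc h by blast
    have "Suc n - k = Suc (n - k)" using k by (simp add: Suc_diff_le)
    then have "q' \<noteq> []" using h(4) Pv_len by fastforce
    then obtain q t where q': "q' = q @ [t]" by (cases q' rule: rev_cases) auto
    have "S a' @ [(z,y)] = (u @ q) @ [t]" using h(5) a q' by simp
    then have Sa: "S a' = u @ q" and t: "t = (z,y)" by auto
    have "q @ [(z,y)] \<in> Pv (Suc (n-k))" using h(4) q' t \<open>Suc n - k = Suc (n - k)\<close> by simp
    then have "q \<in> Pv (n-k) \<and> z = 0" using Pv_snoc[of q "(z,y)" "n-k"] by simp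
    then have "q \<in> Pv (n-k)" "z = 0" by auto
    then have "(a', T (u@p)) \<in> NF n m k S T" using NF_I[of a' n u k p m q S T] h a Sa by simp
    then have "(a', T (u@p)) \<in> L2" using eq by simp
    then show "x \<in> L" using cl2 x a \<open>z = 0\<close> by simp
  qed
  then show ?thesis unfolding hasNF_def using k lin_symp_snocmap[OF S] T by (intro exI[of _ k]) auto
qed



lemma caseC:
  fixes L :: "(('a::field) svec \<times> 'a svec) set"
  assumes L: "lin_lagrangian_rel (Suc n) (Suc m) L"
    and E: "(EE (Suc n), EE (Suc m)) \<in> L" and F: "(FF (Suc n), FF (Suc m)) \<in> L"
    and IH: "\<And>L' :: ('a svec \<times> 'a svec) set. lin_lagrangian_rel n m L' \<Longrightarrow> hasNF n m L'"
  shows "hasNF (Suc n) (Suc m) L"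
proof -
  have E': "((1,0) # vzero n, (1,0) # vzero m) \<in> L" using E by (simp add: EE_def)
  have F': "((0,1) # vzero n, (0,1) # vzero m) \<in> L" using F by (simp add: FF_def)
  have sub: "rel_lin_subspace (Suc n) (Suc m) L" and iso: "\<forall>p\<in>L. \<forall>q\<in>L. rel_omega p q = 0"
    and co: "\<forall>p. p \<in> vecs (Suc n) \<times> vecs (Suc m) \<longrightarrow> (\<forall>q\<in>L. rel_omega p q = 0) \<longrightarrow> p \<in> L"
    using L unfolding lag_iff by auto
  have lenL: "\<And>a b. (a,b) \<in> L \<Longrightarrow> length a = Suc n \<and> length b = Suc m"
    and zL: "(vzero (Suc n), vzero (Suc m)) \<in> L"
    and addL: "\<And>a b c d. (a,b)\<in>L \<Longrightarrow> (c,d)\<in>L \<Longrightarrow> (vadd a c, vadd b d) \<in> L"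
    and scL: "\<And>t a b. (a,b)\<in>L \<Longrightarrow> (vscale t a, vscale t b) \<in> L"
    using sub unfolding subspace_iff by blast+
  have cl1: "\<exists>t a' b'. a = t # a' \<and> b = t # b' \<and> length a' = n \<and> length b' = m" if ab: "(a,b) \<in> L" for a b
  proof -
    obtain z x a' where a: "a = (z,x) # a'" "length a' = n" using len_Suc_cons lenL ab by blast
    obtain z' x' b' where b: "b = (z',x') # b'" "length b' = m" using len_Suc_cons lenL ab by blast
    have "rel_omega (a,b) ((1,0) # vzero n, (1,0) # vzero m) = 0" using iso ab E' by blast
    then have "x = x'" using a b by simp
    moreover have "rel_omega (a,b) ((0,1) # vzero n, (0,1) # vzero m) = 0" using iso ab F' by blast
    then have "z = z'" using a b by simp
    ultimately show ?thesis using a b by blast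
  qed
  define L2 where "L2 = {(a',b') | a' b' t. (t # a', t # b') \<in> L}"
  have L2_iff: "(a',b') \<in> L2 \<longleftrightarrow> (\<exists>t. (t # a', t # b') \<in> L)" for a' b'
    unfolding L2_def by blast
  have lenL2: "length a' = n \<and> length b' = m" if hh: "(a',b') \<in> L2" for a' b'
  proof -
    obtain t where "(t # a', t # b') \<in> L" using hh unfolding L2_iff by blast
    then show ?thesis using lenL by fastforce
  qed
  have cl2: "(t # a', t # b') \<in> L" if hh: "(a',b') \<in> L2" for a' b' t
  proof -
    obtain s where s: "(s # a', s # b') \<in> L" using hh L2_iff by blast
    obtain z0 x0 where s0: "s = (z0,x0)" by (cases s)
    obtain z x where t: "t = (z,x)" by (cases t)
    have la: "length a' = n" "length b' = m" using lenL2 hh by auto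
    have "(vscale (z-z0) ((1,0) # vzero n), vscale (z-z0) ((1,0) # vzero m)) \<in> L" using scL E' by blast
    then have 1: "(vadd (s # a') (vscale (z-z0) ((1,0) # vzero n)), vadd (s # b') (vscale (z-z0) ((1,0) # vzero m))) \<in> L"
      using addL s by blast
    have "(vscale (x-x0) ((0,1) # vzero n), vscale (x-x0) ((0,1) # vzero m)) \<in> L" using scL F' by blast
    then have "(vadd (vadd (s # a') (vscale (z-z0) ((1,0) # vzero n))) (vscale (x-x0) ((0,1) # vzero n)),
       vadd (vadd (s # b') (vscale (z-z0) ((1,0) # vzero m))) (vscale (x-x0) ((0,1) # vzero m))) \<in> L"
      using addL 1 by blast
    then show ?thesis using la s0 t by simp
  qed
  have LagL2: "lin_lagrangian_rel n m L2"
    unfolding lag_iff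
  proof (intro conjI)
    show "rel_lin_subspace n m L2" unfolding subspace_iff
    proof (intro conjI allI impI)
      fix a b assume "(a,b) \<in> L2" then show "length a = n" using lenL2 by blast
    next
      fix a b assume "(a,b) \<in> L2" then show "length b = m" using lenL2 by blast
    next
      show "(vzero n, vzero m) \<in> L2" using zL unfolding L2_iff vzero_Suc by blast
    next
      fix a b c d assume "(a,b) \<in> L2" "(c,d) \<in> L2"
      then have "((0,0) # a, (0,0) # b) \<in> L" "((0,0) # c, (0,0) # d) \<in> L" using cl2 by blast+
      then have "(vadd ((0,0) # a) ((0,0) # c), vadd ((0,0) # b) ((0,0) # d)) \<in> L" using addL by blast
      then have "((0,0) # vadd a c, (0,0) # vadd b d) \<in> L" by simp
      then show "(vadd a c, vadd b d) \<in> L2" unfolding L2_iff by blast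
    next
      fix t a b assume "(a,b) \<in> L2"
      then have "((0,0) # a, (0,0) # b) \<in> L" using cl2 by blast
      then have "(vscale t ((0,0) # a), vscale t ((0,0) # b)) \<in> L" using scL by blast
      then have "((0,0) # vscale t a, (0,0) # vscale t b) \<in> L" by simp
      then show "(vscale t a, vscale t b) \<in> L2" unfolding L2_iff by blast
    qed
  next
    show "\<forall>p\<in>L2. \<forall>q\<in>L2. rel_omega p q = 0"
    proof (intro ballI)
      fix p q assume pq: "p \<in> L2" "q \<in> L2"
      obtain a b c d where xy: "p = (a,b)" "q = (c,d)" by (cases p, cases q)
      have "((0,0) # a, (0,0) # b) \<in> L" "((0,0) # c, (0,0) # d) \<in> L" using cl2 pq xy by auto
      then have "rel_omega ((0,0) # a, (0,0) # b) ((0,0) # c, (0,0) # d) = 0" using iso by blast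
      then show "rel_omega p q = 0" using xy by simp
    qed
  next
    show "\<forall>p. p \<in> vecs n \<times> vecs m \<longrightarrow> (\<forall>q\<in>L2. rel_omega p q = 0) \<longrightarrow> p \<in> L2"
    proof (intro allI impI)
      fix p assume p: "p \<in> vecs n \<times> vecs m" and o: "\<forall>q\<in>L2. rel_omega p q = 0"
      obtain a b where ab: "p = (a,b)" by (cases p)
      have "((0,0) # a, (0,0) # b) \<in> L"
      proof (rule co[rule_format])
        show "((0,0) # a, (0,0) # b) \<in> vecs (Suc n) \<times> vecs (Suc m)" using p ab by auto
      next
        fix q assume q: "q \<in> L"
        obtain c d where cd: "q = (c,d)" by (cases q)
        obtain t c' d' where c: "c = t # c'" "d = t # d'" using cl1 q cd by blast
        obtain z x where t: "t = (z,x)" by (cases t)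
        have "(c',d') \<in> L2" using q cd c L2_iff by blast
        then have "rel_omega (a,b) (c',d') = 0" using o ab by blast
        then show "rel_omega ((0,0) # a, (0,0) # b) q = 0" using cd c t by simp
      qed
      then show "p \<in> L2" using ab L2_iff by blast
    qed
  qed
  obtain k S T where k: "k \<le> min n m" and S: "lin_symp n S" and T: "lin_symp m T"
    and eq: "L2 = NF n m k S T" using IH[OF LagL2] unfolding hasNF_def by blast
  have "L = NF (Suc n) (Suc m) (Suc k) (consmap S) (consmap T)"
  proof (intro set_eqI iffI)
    fix x assume xL: "x \<in> L"
    obtain a b where x: "x = (a,b)" by (cases x)
    obtain t a' b' where a: "a = t # a'" "b = t # b'" "length a' = n" using cl1 xL x by blast
    have "(a',b') \<in> L2" using L2_iff xL x a by blast
    then have "(a',b') \<in> NF n m k S T" using eq by simp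
    then obtain v u p q where e2: "(a',b') = (v, T (u@p))" and h: "length v = n" "length u = k"
      "p \<in> Pv (m-k)" "q \<in> Pv (n-k)" "S v = u @ q" by (rule NF_E)
    have "consmap S a = (t # u) @ q" using a h e2 by simp
    moreover have "b = consmap T ((t # u) @ p)" using a e2 by simp
    ultimately show "x \<in> NF (Suc n) (Suc m) (Suc k) (consmap S) (consmap T)"
      using NF_I[of a "Suc n" "t # u" "Suc k" p "Suc m" q "consmap S" "consmap T"] x a h by simp
  next
    fix x assume "x \<in> NF (Suc n) (Suc m) (Suc k) (consmap S) (consmap T)"
    then obtain a u' p q where x: "x = (a, consmap T (u'@p))" and h: "length a = Suc n" "length u' = Suc k"
      "p \<in> Pv (Suc m - Suc k)" "q \<in> Pv (Suc n - Suc k)" "consmap S a = u' @ q" by (rule NF_E)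
    obtain z y a' where a: "a = (z,y) # a'" "length a' = n" using len_Suc_cons h by blast
    obtain t u where u': "u' = t # u" using h by (cases u') auto
    have "(z,y) = t" "S a' = u @ q" using h(5) a u' by auto
    then have "(a', T (u@p)) \<in> NF n m k S T" using NF_I[of a' n u k p m q S T] h a u' by simp
    then have "(a', T (u@p)) \<in> L2" using eq by simp
    then have "(t # a', t # T (u@p)) \<in> L" using cl2 by blast
    then show "x \<in> L" using x a u' \<open>(z,y) = t\<close> by simp
  qed
  then show ?thesis unfolding hasNF_def using k lin_symp_consmap[OF S] lin_symp_consmap[OF T]
    by (intro exI[of _ "Suc k"]) auto
qed



lemma e_nz: "vzero n @ [(0,1)] \<noteq> (vzero (Suc n) :: ('a::field) svec)"
  by (simp add: vzero_Suc')

lemma stepA: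
  fixes L :: "(('a::field) svec \<times> 'a svec) set"
  assumes L: "lin_lagrangian_rel n m L" and v: "v \<noteq> vzero n" "(v, vzero m) \<in> L"
    and IH: "\<And>L' :: ('a svec \<times> 'a svec) set. lin_lagrangian_rel (n-1) m L' \<Longrightarrow> hasNF (n-1) m L'"
  shows "hasNF n m L"
proof -
  have lv: "length v = n" using L v unfolding lag_iff subspace_iff by blast
  have "n \<noteq> 0" using lv v by auto
  then obtain n' where n: "n = Suc n'" by (cases n) auto
  obtain S0 where S0: "lin_symp n S0" "S0 v = vzero n' @ [(0,1)]"
    using trans1[OF lv, of "vzero n' @ [(0,1)]"] v e_nz[of n'] n by auto
  have L1: "lin_lagrangian_rel (Suc n') m (mapR S0 id L)" using lag_mapR[OF L S0(1) lin_symp_id] n by simp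
  have "(vzero n' @ [(0,1)], vzero m) \<in> mapR S0 id L" using v S0 unfolding mapR_iff by force
  then have "hasNF (Suc n') m (mapR S0 id L)" using caseA[OF L1] IH n by simp
  then show ?thesis using NF_transport[OF L S0(1) lin_symp_id] n by simp
qed

lemma hasNF_swap:
  fixes L :: "(('a::field) svec \<times> 'a svec) set"
  assumes "hasNF m n L" shows "hasNF n m (swapR L)"
proof -
  obtain k S T where "k \<le> min m n" "lin_symp m S" "lin_symp n T" "L = NF m n k S T"
    using assms unfolding hasNF_def by blast
  then show ?thesis using NF_swap by blast
qed

lemma NF_00: "NF 0 0 0 id T = {([], T [])}"
  by (auto simp: NF_def Pv_def)

lemma lin_main_aux:
  "\<forall>n m (L :: (('a::field) svec \<times> 'a svec) set). n + m = N \<longrightarrow> lin_lagrangian_rel n m L \<longrightarrow> hasNF n m L"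
proof (induction N rule: less_induct)
  case (less N)
  show ?case
  proof (intro allI impI)
    fix n m and L :: "('a svec \<times> 'a svec) set"
    assume N: "n + m = N" and L: "lin_lagrangian_rel n m L"
    have sub: "rel_lin_subspace n m L" and iso: "\<forall>p\<in>L. \<forall>q\<in>L. rel_omega p q = 0"
      and co: "\<forall>p. p \<in> vecs n \<times> vecs m \<longrightarrow> (\<forall>q\<in>L. rel_omega p q = 0) \<longrightarrow> p \<in> L"
      using L unfolding lag_iff by auto
    have lenL: "\<And>a b. (a,b) \<in> L \<Longrightarrow> length a = n \<and> length b = m"
      and zL: "(vzero n, vzero m) \<in> L"
      and scL: "\<And>t a b. (a,b)\<in>L \<Longrightarrow> (vscale t a, vscale t b) \<in> L"
      using sub unfolding subspace_iff by blast+
    show "hasNF n m L"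
    proof (cases "\<exists>v. v \<noteq> vzero n \<and> (v, vzero m) \<in> L")
      case True
      then obtain v where v: "v \<noteq> vzero n" "(v, vzero m) \<in> L" by blast
      have "length v = n" using lenL v by blast
      then have "n \<noteq> 0" using v by auto
      have "hasNF (n-1) m L'" if "lin_lagrangian_rel (n-1) m L'" for L' :: "('a svec \<times> 'a svec) set"
      proof -
        have "n-1+m < N" using N \<open>n \<noteq> 0\<close> by simp
        then show ?thesis using less.IH that by blast
      qed
      then show ?thesis using stepA[OF L v] by blast
    next
      case nA: False
      show ?thesis
      proof (cases "\<exists>w. w \<noteq> vzero m \<and> (vzero n, w) \<in> L")
        case True
        then obtain w where w: "w \<noteq> vzero m" "(w, vzero n) \<in> swapR L" by auto
        have "length w = m" using lenL w by auto
        then have "m \<noteq> 0" using w by auto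
        have "hasNF (m-1) n L'" if "lin_lagrangian_rel (m-1) n L'" for L' :: "('a svec \<times> 'a svec) set"
        proof -
          have "m-1+n < N" using N \<open>m \<noteq> 0\<close> by simp
          then show ?thesis using less.IH that by blast
        qed
        then have "hasNF m n (swapR L)" using stepA[OF lag_swap[OF L] w] by blast
        then show ?thesis using hasNF_swap by fastforce
      next
        case nB: False
        show ?thesis
        proof (cases "n = 0 \<or> m = 0")
          case True
          have "L \<subseteq> {(vzero n, vzero m)}"
          proof
            fix x assume xL: "x \<in> L"
            obtain a b where x: "x = (a,b)" by (cases x)
            have "length a = n" "length b = m" using lenL xL x by auto
            then have "a = vzero n \<or> b = vzero m" using True by auto
            then have "a = vzero n \<and> b = vzero m" using nA nB xL x by blast
            then show "x \<in> {(vzero n, vzero m)}" using x by simp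
          qed
          then have "n = 0 \<and> m = 0" using lag_trivial[OF L] by blast
          moreover then have "L = {([], [])}" using \<open>L \<subseteq> {(vzero n, vzero m)}\<close> zL by auto
          ultimately show ?thesis unfolding hasNF_def using lin_symp_id NF_00[of id]
            by (intro exI[of _ 0]) auto
        next
          case False
          then obtain n' m' where nm: "n = Suc n'" "m = Suc m'" by (cases n; cases m) auto
          have "\<exists>a b c d. (a,b) \<in> L \<and> (c,d) \<in> L \<and> omega a c \<noteq> 0"
          proof (rule ccontr)
            assume "\<not> ?thesis"
            then have o: "\<And>a b c d. (a,b) \<in> L \<Longrightarrow> (c,d) \<in> L \<Longrightarrow> omega a c = 0" by blast
            have "L \<subseteq> {(vzero n, vzero m)}"
            proof
              fix x assume xL: "x \<in> L"
              obtain a b where x: "x = (a,b)" by (cases x)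
              have "(a, vzero m) \<in> L"
              proof (rule co[rule_format])
                show "(a, vzero m) \<in> vecs n \<times> vecs m" using lenL xL x by auto
              next
                fix q assume "q \<in> L"
                then show "rel_omega (a, vzero m) q = 0" using o xL x by (cases q) auto
              qed
              then have "a = vzero n" using nA by blast
              then have "b = vzero m" using nB xL x by blast
              then show "x \<in> {(vzero n, vzero m)}" using x \<open>a = vzero n\<close> by simp
            qed
            then show False using lag_trivial[OF L] nm by simp
          qed
          then obtain a b c d where abcd: "(a,b) \<in> L" "(c,d) \<in> L" "omega a c \<noteq> 0" by blast
          define r where "r = omega a c"
          have cd': "(vscale (1/r) c, vscale (1/r) d) \<in> L" using scL abcd by blast
          have o1: "omega a (vscale (1/r) c) = 1" using abcd by (simp add: r_def omega_vscale_right)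
          have "rel_omega (a,b) (vscale (1/r) c, vscale (1/r) d) = 0" using iso abcd cd' by blast
          then have o2: "omega b (vscale (1/r) d) = 1" using o1 by simp
          have la: "length a = n" "length b = m" "length c = n" "length d = m" using lenL abcd by auto
          obtain S0 where S0: "lin_symp n S0" "S0 a = EE n" "S0 (vscale (1/r) c) = FF n"
            using trans2[OF la(1) _ o1] la by auto
          obtain T0 where T0: "lin_symp m T0" "T0 b = EE m" "T0 (vscale (1/r) d) = FF m"
            using trans2[OF la(2) _ o2] la by auto
          have L1: "lin_lagrangian_rel (Suc n') (Suc m') (mapR S0 T0 L)"
            using lag_mapR[OF L S0(1) T0(1)] nm by simp
          have "(EE n, EE m) \<in> mapR S0 T0 L" using abcd S0 T0 unfolding mapR_iff by metis
          moreover have "(FF n, FF m) \<in> mapR S0 T0 L" using cd' S0 T0 unfolding mapR_iff by metis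
          moreover have "hasNF n' m' L'" if "lin_lagrangian_rel n' m' L'" for L' :: "('a svec \<times> 'a svec) set"
          proof -
            have "n'+m' < N" using N nm by simp
            then show ?thesis using less.IH that by blast
          qed
          ultimately have "hasNF (Suc n') (Suc m') (mapR S0 T0 L)"
            using caseC[OF L1] nm by simp
          then show ?thesis using NF_transport[OF L S0(1) T0(1)] nm by simp
        qed
      qed
    qed
  qed
qed

lemma lin_main: "lin_lagrangian_rel n m (L :: (('a::field) svec \<times> 'a svec) set) \<Longrightarrow> hasNF n m L"
  using lin_main_aux by blast



lemma vadd_cancel1: "length x = length b \<Longrightarrow> vadd (vadd x b) (vscale (-1) b) = (x::('a::field) svec)"
  by (simp add: vadd_assoc vadd_neg)
lemma vadd_cancel2: "length x = length b \<Longrightarrow> vadd (vadd x (vscale (-1) b)) b = (x::('a::field) svec)"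
  by (simp add: vadd_assoc vadd_comm[of "vscale (-1) b" b] vadd_neg)

lemma affine_of_lin:
  fixes S :: "('a::field) svec \<Rightarrow> 'a svec"
  assumes S: "lin_symp n S" and b: "length b = n"
  shows "affine_symp n (\<lambda>v. vadd (S v) b)"
proof -
  obtain Si where Si: "lin_symp n Si" "\<forall>v\<in>vecs n. Si (S v) = v" "\<forall>v\<in>vecs n. S (Si v) = v"
    using lin_symp_inv[OF S] by blast
  have "bij_betw (\<lambda>v. vadd (S v) b) (vecs n) (vecs n)"
  proof (rule bij_betw_byWitness[where f'="\<lambda>v. Si (vadd v (vscale (-1) b))"])
    show "\<forall>a\<in>vecs n. Si (vadd (vadd (S a) b) (vscale (- 1) b)) = a"
    proof
      fix a :: "'a svec" assume a: "a \<in> vecs n"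
      then have "length (S a) = length b" using lin_symp_vecs[OF S] b by simp
      then have "vadd (vadd (S a) b) (vscale (- 1) b) = S a" by (rule vadd_cancel1)
      then show "Si (vadd (vadd (S a) b) (vscale (- 1) b)) = a" using Si(2) a by simp
    qed
    show "\<forall>a'\<in>vecs n. vadd (S (Si (vadd a' (vscale (- 1) b)))) b = a'"
    proof
      fix a' :: "'a svec" assume "a' \<in> vecs n"
      then have "vadd a' (vscale (- 1) b) \<in> vecs n" using b by simp
      then have "S (Si (vadd a' (vscale (- 1) b))) = vadd a' (vscale (- 1) b)" using Si(3) by blast
      moreover have "length a' = length b" using \<open>a' \<in> vecs n\<close> b by simp
      ultimately show "vadd (S (Si (vadd a' (vscale (- 1) b)))) b = a'"
        using vadd_cancel2 by simp
    qed
    show "(\<lambda>v. vadd (S v) b) ` vecs n \<subseteq> vecs n" using lin_symp_vecs[OF S] b by auto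
    show "(\<lambda>v. Si (vadd v (vscale (- 1) b))) ` vecs n \<subseteq> vecs n"
      using lin_symp_vecs[OF Si(1)] b by auto
  qed
  moreover have "lin_map n S" "preserves_omega n S" using S by (auto simp: lin_symp_def)
  ultimately show ?thesis unfolding affine_symp_def using b by auto
qed


lemma affine_main:
  fixes D :: "(('a::field) svec \<times> 'a svec) set"
  assumes D: "lin_lagrangian_rel n m D" and a: "a \<in> vecs n \<times> vecs m"
  shows "\<exists>k S T. k \<le> min n m \<and> affine_symp n S \<and> affine_symp m T \<and> padd a ` D = NF n m k S T"
proof -
  obtain k S T where k: "k \<le> min n m" and S: "lin_symp n S" and T: "lin_symp m T"
    and eq: "D = NF n m k S T" using lin_main[OF D] unfolding hasNF_def by blast
  obtain a1 a2 where a12: "a = (a1,a2)" by (cases a)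
  have la: "length a1 = n" "length a2 = m" using a a12 by auto
  have lsa: "length (S a1) = n" using lin_symp_vecs[OF S] la by simp
  define S' where "S' = (\<lambda>v. vadd (S v) (vscale (-1) (S a1)))"
  define T' where "T' = (\<lambda>v. vadd (T v) a2)"
  have aS: "affine_symp n S'" unfolding S'_def using affine_of_lin[OF S] lsa by simp
  have aT: "affine_symp m T'" unfolding T'_def using affine_of_lin[OF T] la by simp
  have lenD: "\<And>x y. (x,y) \<in> D \<Longrightarrow> length x = n \<and> length y = m"
    using D unfolding lag_iff subspace_iff by blast
  have "padd a ` D = NF n m k S' T'"
  proof (intro set_eqI iffI)
    fix z assume "z \<in> padd a ` D"
    then obtain v w where vw: "(v,w) \<in> D" "z = (vadd a1 v, vadd a2 w)" using a12
      by (auto simp: padd_def)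
    have lvw: "length v = n" "length w = m" using lenD vw by auto
    from vw(1) have "(v,w) \<in> NF n m k S T" using eq by simp
    then obtain v' u p q where e: "(v,w) = (v', T (u@p))" and h: "length v' = n" "length u = k"
      "p \<in> Pv (m-k)" "q \<in> Pv (n-k)" "S v' = u @ q" by (rule NF_E)
    have "S (vadd a1 v) = vadd (S a1) (S v)" using lin_symp_add[OF S, of a1 v] la lvw by simp
    also have "\<dots> = vadd (S v) (S a1)" by (rule vadd_comm)
    finally have "S' (vadd a1 v) = vadd (vadd (S v) (S a1)) (vscale (-1) (S a1))" unfolding S'_def by simp
    also have "\<dots> = S v" using lin_symp_vecs[OF S] lvw lsa by (intro vadd_cancel1) simp
    finally have "S' (vadd a1 v) = S v" .
    then have "S' (vadd a1 v) = u @ q" using e h by simp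
    moreover have "vadd a2 w = T' (u@p)" unfolding T'_def using e vadd_comm[of a2 w] by simp
    moreover have "length (vadd a1 v) = n" using la lvw by simp
    ultimately show "z \<in> NF n m k S' T'" using NF_I[of "vadd a1 v" n u k p m q S' T'] vw h by simp
  next
    fix z assume "z \<in> NF n m k S' T'"
    then obtain x u p q where z: "z = (x, T' (u@p))" and h: "length x = n" "length u = k"
      "p \<in> Pv (m-k)" "q \<in> Pv (n-k)" "S' x = u @ q" by (rule NF_E)
    define v where "v = vadd x (vscale (-1) a1)"
    have lv: "length v = n" using h la by (simp add: v_def)
    have "S v = vadd (S x) (S (vscale (-1) a1))" unfolding v_def
      using lin_symp_add[OF S] h la by simp
    also have "\<dots> = S' x" unfolding S'_def using lin_symp_scale[OF S] la by simp
    finally have "S v = u @ q" using h by simp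
    then have "(v, T (u@p)) \<in> NF n m k S T" using NF_I[of v n u k p m q S T] lv h by simp
    then have "(v, T (u@p)) \<in> D" using eq by simp
    moreover have "vadd a1 v = x"
    proof -
      have "vadd a1 v = vadd v a1" by (rule vadd_comm)
      also have "\<dots> = x" unfolding v_def using h la by (intro vadd_cancel2) simp
      finally show ?thesis .
    qed
    moreover have "vadd a2 (T (u@p)) = T' (u@p)" unfolding T'_def by (rule vadd_comm)
    ultimately have "padd a (v, T (u@p)) = z" using z a12 by simp
    then show "z \<in> padd a ` D" using \<open>(v, T (u@p)) \<in> D\<close> by blast
  qed
  then show ?thesis using k aS aT by blast
qed

theorem mainTheorem1:
  fixes L :: "(('a::field) svec \<times> 'a svec) set" and n m :: nat
  assumes "affine_lagrangian_rel n m L" and "L \<noteq> {}"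
  shows "(\<exists>k S T. k \<le> min n m \<and> affine_symp n S \<and> affine_symp m T \<and>
            L = graph n S O rsum (idrel k) (dagger (Prel (n - k)))
                  O rsum (idrel k) (Prel (m - k)) O graph m T)
       \<and> (lin_lagrangian_rel n m L \<longrightarrow>
          (\<exists>k S T. k \<le> min n m \<and> lin_symp n S \<and> lin_symp m T \<and>
            L = graph n S O rsum (idrel k) (dagger (Prel (n - k)))
                  O rsum (idrel k) (Prel (m - k)) O graph m T))"
proof (intro conjI impI)
  obtain a D where a: "a \<in> vecs n \<times> vecs m" and D: "lin_lagrangian_rel n m D" and LD: "L = padd a ` D"
    using assms unfolding affine_lagrangian_rel_def by blast
  obtain k S T where "k \<le> min n m" "affine_symp n S" "affine_symp m T" "L = NF n m k S T"
    using affine_main[OF D a] LD by blast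
  then show "\<exists>k S T. k \<le> min n m \<and> affine_symp n S \<and> affine_symp m T \<and>
            L = graph n S O rsum (idrel k) (dagger (Prel (n - k)))
                  O rsum (idrel k) (Prel (m - k)) O graph m T"
    using comp_NF[of k n m S T] by (intro exI[of _ k] exI[of _ S] exI[of _ T]) auto
next
  assume "lin_lagrangian_rel n m L"
  then obtain k S T where "k \<le> min n m" "lin_symp n S" "lin_symp m T" "L = NF n m k S T"
    using lin_main unfolding hasNF_def by blast
  then show "\<exists>k S T. k \<le> min n m \<and> lin_symp n S \<and> lin_symp m T \<and>
            L = graph n S O rsum (idrel k) (dagger (Prel (n - k)))
                  O rsum (idrel k) (Prel (m - k)) O graph m T"
    using comp_NF[of k n m S T] by (intro exI[of _ k] exI[of _ S] exI[of _ T]) auto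
qed


end
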